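(* Let $n,k\ge2$, $X=\{(i,j):1\le i\le n,\ 1\le j\le k\}$, let $G\cong S_n\wr S_k=S_n^{k}\rtimes S_k$ be the group of all permutations of $X$ that map each column $\{(i,j):1\le i\le n\}$ ($j$ fixed) onto a column, and let $H$ be the stabilizer of $x_0=(1,1)$. Then $(H,G)$ is a Gelfand pair; the $H$-orbits on $X$ are $o_1=\{(1,1)\}$, $o_2=\{(i,1):2\le i\le n\}$, $o_3=\{(i,j):j\ge2\}$, of sizes $1,\,n-1,\,n(k-1)$; and $\mathbb{C}[X]=T_1\oplus T_2\oplus T_3$ into pairwise non-isomorphic irreducibles, where $T_1$ is the constants, $T_2$ is the space of functions $f(i,j)=u(j)$ with $\sum_j u(j)=0$ (dimension $k-1$), and $T_3$ is the orthogonal complement of $T_1\oplus T_2$ (dimension $(n-1)k$). With $\mathrm{X}_i$ the characteristic function of the $G$-orbit of $X\times X$ containing $\{x_0\}\times o_i$ and $\Psi_j$ the spherical idempotent of $T_j$, the matrix $C_{ij}=(\mathrm{X}_i,\Psi_j)$ is $$M_{n,k}=\begin{pmatrix}1&k-1&k(n-1)\\ n-1&(k-1)(n-1)&-k(n-1)\\ (k-1)n&(1-k)n&0\end{pmatrix},$$ and $M_{n,k}^{T}=M_{k,n}$ (the corresponding matrix for $S_k\wr S_n$ acting on the same set with rows and columns interchanged).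
   Context: For a finite group $G$, a subgroup $H$, and $X=G/H$: the space $\mathbb{C}[X\times X]^G$ of diagonally $G$-invariant functions on $X\times X$ carries the convolution $(f\times g)(x,z)=\sum_yf(x,y)g(y,z)$ and the inner product $(a,b)=\sum_{x,y}a(x,y)\overline{b(x,y)}$; $(H,G)$ is a Gelfand pair if this convolution algebra is commutative. For each irreducible summand $T_j$ of $\mathbb{C}[X]$ (with $(gf)(x)=f(g^{-1}x)$), with $G$-invariant Hermitian inner product $\langle\cdot,\cdot\rangle$ (linear in the first variable) and unit $H$-invariant vector $\theta_j$, set $\psi_j(g)=\frac{\dim T_j}{|X|}\langle T_j(g)\theta_j,\theta_j\rangle$ and $\Psi_j(gH,g'H)=\psi_j(g^{-1}g')$, a function on $X\times X$. *)

theory Defs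
  imports "HOL-Analysis.Analysis" "HOL-Library.Function_Algebras"
begin

definition lcoset :: "('a \<Rightarrow> 'a) \<Rightarrow> ('a \<Rightarrow> 'a) set \<Rightarrow> ('a \<Rightarrow> 'a) set" where
  "lcoset g H = (\<lambda>h. g \<circ> h) ` H"

definition coset_space :: "('a \<Rightarrow> 'a) set \<Rightarrow> ('a \<Rightarrow> 'a) set \<Rightarrow> ('a \<Rightarrow> 'a) set set" where
  "coset_space G H = (\<lambda>g. lcoset g H) ` G"

definition coset_act :: "('a \<Rightarrow> 'a) \<Rightarrow> ('a \<Rightarrow> 'a) set \<Rightarrow> ('a \<Rightarrow> 'a) set" where
  "coset_act g C = (\<lambda>c. g \<circ> c) ` C"

definition diag_invariant :: "'g set \<Rightarrow> ('g \<Rightarrow> 'b \<Rightarrow> 'b) \<Rightarrow> 'b set \<Rightarrow> ('b \<times> 'b \<Rightarrow> complex) \<Rightarrow> bool" where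
  "diag_invariant G act Y F \<longleftrightarrow>
     (\<forall>p. p \<notin> Y \<times> Y \<longrightarrow> F p = 0) \<and>
     (\<forall>g\<in>G. \<forall>x\<in>Y. \<forall>y\<in>Y. F (act g x, act g y) = F (x, y))"

definition conv :: "'b set \<Rightarrow> ('b \<times> 'b \<Rightarrow> complex) \<Rightarrow> ('b \<times> 'b \<Rightarrow> complex) \<Rightarrow> ('b \<times> 'b \<Rightarrow> complex)" where
  "conv Y F1 F2 = (\<lambda>(x, z). if x \<in> Y \<and> z \<in> Y then (\<Sum>y\<in>Y. F1 (x, y) * F2 (y, z)) else 0)"

definition gelfand_pair :: "('a \<Rightarrow> 'a) set \<Rightarrow> ('a \<Rightarrow> 'a) set \<Rightarrow> bool" where
  "gelfand_pair H G \<longleftrightarrow>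
     (\<forall>F1 F2. diag_invariant G coset_act (coset_space G H) F1 \<and>
              diag_invariant G coset_act (coset_space G H) F2 \<longrightarrow>
              conv (coset_space G H) F1 F2 = conv (coset_space G H) F2 F1)"

definition cscale :: "complex \<Rightarrow> ('b \<Rightarrow> complex) \<Rightarrow> ('b \<Rightarrow> complex)" where
  "cscale c f = (\<lambda>x. c * f x)"

definition funsp :: "'b set \<Rightarrow> ('b \<Rightarrow> complex) set" where
  "funsp X = {f. \<forall>x. x \<notin> X \<longrightarrow> f x = 0}"

definition inner_X :: "'b set \<Rightarrow> ('b \<Rightarrow> complex) \<Rightarrow> ('b \<Rightarrow> complex) \<Rightarrow> complex" where
  "inner_X X f g = (\<Sum>x\<in>X. f x * cnj (g x))"

abbreviation csubspace :: "('b \<Rightarrow> complex) set \<Rightarrow> bool" where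
  "csubspace W \<equiv> module.subspace cscale W"

abbreviation cdim :: "('b \<Rightarrow> complex) set \<Rightarrow> nat" where
  "cdim W \<equiv> vector_space.dim cscale W"

abbreviation clinear :: "(('b \<Rightarrow> complex) \<Rightarrow> ('b \<Rightarrow> complex)) \<Rightarrow> bool" where
  "clinear L \<equiv> Vector_Spaces.linear cscale cscale L"

definition perm_act :: "('b \<Rightarrow> 'b) \<Rightarrow> ('b \<Rightarrow> complex) \<Rightarrow> ('b \<Rightarrow> complex)" where
  "perm_act g f = (\<lambda>x. f (inv g x))"

definition G_invariant_sub :: "('b \<Rightarrow> 'b) set \<Rightarrow> ('b \<Rightarrow> complex) set \<Rightarrow> bool" where
  "G_invariant_sub G W \<longleftrightarrow> csubspace W \<and> (\<forall>g\<in>G. \<forall>f\<in>W. perm_act g f \<in> W)"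

definition irreducible_rep :: "('b \<Rightarrow> 'b) set \<Rightarrow> ('b \<Rightarrow> complex) set \<Rightarrow> bool" where
  "irreducible_rep G W \<longleftrightarrow> G_invariant_sub G W \<and> W \<noteq> {0} \<and>
     (\<forall>U. G_invariant_sub G U \<and> U \<subseteq> W \<longrightarrow> U = {0} \<or> U = W)"

definition isomorphic_rep :: "('b \<Rightarrow> 'b) set \<Rightarrow> ('b \<Rightarrow> complex) set \<Rightarrow> ('b \<Rightarrow> complex) set \<Rightarrow> bool" where
  "isomorphic_rep G V W \<longleftrightarrow> (\<exists>L. clinear L \<and> bij_betw L V W \<and>
     (\<forall>g\<in>G. \<forall>f\<in>V. L (perm_act g f) = perm_act g (L f)))"

definition direct_sum3 :: "('b \<Rightarrow> complex) set \<Rightarrow> ('b \<Rightarrow> complex) set \<Rightarrow> ('b \<Rightarrow> complex) set \<Rightarrow> ('b \<Rightarrow> complex) set \<Rightarrow> bool" where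
  "direct_sum3 V W1 W2 W3 \<longleftrightarrow>
     W1 \<subseteq> V \<and> W2 \<subseteq> V \<and> W3 \<subseteq> V \<and>
     (\<forall>f\<in>V. \<exists>!(f1, f2, f3). f1 \<in> W1 \<and> f2 \<in> W2 \<and> f3 \<in> W3 \<and> f = f1 + f2 + f3)"

definition theta :: "('b \<Rightarrow> 'b) set \<Rightarrow> 'b set \<Rightarrow> ('b \<Rightarrow> complex) set \<Rightarrow> ('b \<Rightarrow> complex)" where
  "theta H X T = (SOME \<theta>. \<theta> \<in> T \<and> (\<forall>h\<in>H. perm_act h \<theta> = \<theta>) \<and> inner_X X \<theta> \<theta> = 1)"

definition psi :: "('b \<Rightarrow> 'b) set \<Rightarrow> 'b set \<Rightarrow> ('b \<Rightarrow> complex) set \<Rightarrow> ('b \<Rightarrow> 'b) \<Rightarrow> complex" where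
  "psi H X T g = (of_nat (cdim T) / of_nat (card X)) *
                 inner_X X (perm_act g (theta H X T)) (theta H X T)"

text \<open>Psi(gH, g'H) = psi(g^{-1} g'); the coset gH is identified with g x0 \<in> X.\<close>

definition rep_of :: "('b \<Rightarrow> 'b) set \<Rightarrow> 'b \<Rightarrow> 'b \<Rightarrow> ('b \<Rightarrow> 'b)" where
  "rep_of G x0 x = (SOME g. g \<in> G \<and> g x0 = x)"

definition Psi :: "('b \<Rightarrow> 'b) set \<Rightarrow> ('b \<Rightarrow> 'b) set \<Rightarrow> 'b set \<Rightarrow> 'b \<Rightarrow> ('b \<Rightarrow> complex) set \<Rightarrow> ('b \<times> 'b \<Rightarrow> complex)" where
  "Psi G H X x0 T = (\<lambda>(x, y). if x \<in> X \<and> y \<in> X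
      then psi H X T (inv (rep_of G x0 x) \<circ> rep_of G x0 y) else 0)"

definition orbit_char :: "('b \<Rightarrow> 'b) set \<Rightarrow> 'b \<Rightarrow> 'b set \<Rightarrow> ('b \<times> 'b \<Rightarrow> complex)" where
  "orbit_char G x0 Orb = (\<lambda>p. if p \<in> {(g x0, g y) | g y. g \<in> G \<and> y \<in> Orb} then 1 else 0)"

definition inner_XX :: "'b set \<Rightarrow> ('b \<times> 'b \<Rightarrow> complex) \<Rightarrow> ('b \<times> 'b \<Rightarrow> complex) \<Rightarrow> complex" where
  "inner_XX X a b = (\<Sum>p\<in>X \<times> X. a p * cnj (b p))"

definition Xset :: "nat \<Rightarrow> nat \<Rightarrow> (nat \<times> nat) set" where
  "Xset n k = {1..n} \<times> {1..k}"

definition column :: "nat \<Rightarrow> nat \<Rightarrow> (nat \<times> nat) set" where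
  "column n j = {1..n} \<times> {j}"

definition wreathG :: "nat \<Rightarrow> nat \<Rightarrow> (nat \<times> nat \<Rightarrow> nat \<times> nat) set" where
  "wreathG n k = {p. p permutes Xset n k \<and>
      (\<forall>j\<in>{1..k}. \<exists>j'\<in>{1..k}. p ` column n j = column n j')}"

definition stabH :: "nat \<Rightarrow> nat \<Rightarrow> (nat \<times> nat \<Rightarrow> nat \<times> nat) set" where
  "stabH n k = {p \<in> wreathG n k. p (1, 1) = (1, 1)}"

definition orbits_of :: "('b \<Rightarrow> 'b) set \<Rightarrow> 'b set \<Rightarrow> 'b set set" where
  "orbits_of H X = (\<lambda>x. (\<lambda>h. h x) ` H) ` X"

definition orb1 :: "nat \<Rightarrow> nat \<Rightarrow> (nat \<times> nat) set" where
  "orb1 n k = {(1, 1)}"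
definition orb2 :: "nat \<Rightarrow> nat \<Rightarrow> (nat \<times> nat) set" where
  "orb2 n k = {2..n} \<times> {1}"
definition orb3 :: "nat \<Rightarrow> nat \<Rightarrow> (nat \<times> nat) set" where
  "orb3 n k = {1..n} \<times> {2..k}"

definition Tconst :: "nat \<Rightarrow> nat \<Rightarrow> (nat \<times> nat \<Rightarrow> complex) set" where
  "Tconst n k = {f \<in> funsp (Xset n k). \<exists>c. \<forall>x\<in>Xset n k. f x = c}"

definition Tcol :: "nat \<Rightarrow> nat \<Rightarrow> (nat \<times> nat \<Rightarrow> complex) set" where
  "Tcol n k = {f \<in> funsp (Xset n k). \<exists>u :: nat \<Rightarrow> complex.
       (\<Sum>j=1..k. u j) = 0 \<and> (\<forall>(i, j)\<in>Xset n k. f (i, j) = u j)}"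

definition Trest :: "nat \<Rightarrow> nat \<Rightarrow> (nat \<times> nat \<Rightarrow> complex) set" where
  "Trest n k = {f \<in> funsp (Xset n k).
       \<forall>g \<in> Tconst n k \<union> Tcol n k. inner_X (Xset n k) f g = 0}"

definition Tj :: "nat \<Rightarrow> nat \<Rightarrow> nat \<Rightarrow> (nat \<times> nat \<Rightarrow> complex) set" where
  "Tj n k j = (if j = 1 then Tconst n k else if j = 2 then Tcol n k else Trest n k)"

definition orbj :: "nat \<Rightarrow> nat \<Rightarrow> nat \<Rightarrow> (nat \<times> nat) set" where
  "orbj n k i = (if i = 1 then orb1 n k else if i = 2 then orb2 n k else orb3 n k)"

definition Mmat :: "nat \<Rightarrow> nat \<Rightarrow> nat \<Rightarrow> nat \<Rightarrow> int" where
  "Mmat n k i j = (let n = int n; k = int k in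
     if i = 1 then (if j = 1 then 1 else if j = 2 then k - 1 else k * (n - 1))
     else if i = 2 then (if j = 1 then n - 1 else if j = 2 then (k - 1) * (n - 1) else - k * (n - 1))
     else (if j = 1 then (k - 1) * n else if j = 2 then (1 - k) * n else 0))"

definition Cmat :: "nat \<Rightarrow> nat \<Rightarrow> nat \<Rightarrow> nat \<Rightarrow> complex" where
  "Cmat n k i j = inner_XX (Xset n k)
      (orbit_char (wreathG n k) (1, 1) (orbj n k i))
      (Psi (wreathG n k) (stabH n k) (Xset n k) (1, 1) (Tj n k j))"

end

theory Submission
  imports Defs
begin
lemma vs_cscale: "vector_space cscale"
  by unfold_locales (auto simp: cscale_def fun_eq_iff algebra_simps)

interpretation cs: vector_space cscale by (rule vs_cscale)

definition ind :: "'b set \<Rightarrow> 'b \<Rightarrow> complex" where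
  "ind S = (\<lambda>x. if x \<in> S then 1 else 0)"

lemma perm_act_ind: "bij g \<Longrightarrow> perm_act g (ind S) = ind (g ` S)"
  unfolding perm_act_def ind_def fun_eq_iff
  by (metis bij_inv_eq_iff image_iff)

lemma perm_act_add[simp]: "perm_act g (f1 + f2) = perm_act g f1 + perm_act g f2"
  by (simp add: perm_act_def fun_eq_iff)
lemma perm_act_diff[simp]: "perm_act g (f1 - f2) = perm_act g f1 - perm_act g f2"
  by (simp add: perm_act_def fun_eq_iff)
lemma perm_act_uminus[simp]: "perm_act g (- f1) = - perm_act g f1"
  by (simp add: perm_act_def fun_eq_iff)
lemma perm_act_scale[simp]: "perm_act g (cscale c f) = cscale c (perm_act g f)"
  by (simp add: perm_act_def fun_eq_iff cscale_def)

definition tr :: "nat \<Rightarrow> nat \<Rightarrow> nat \<Rightarrow> nat" where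
  "tr i i' a = (if a = i then i' else if a = i' then i else a)"

definition sig :: "nat \<Rightarrow> nat \<Rightarrow> nat\<times>nat \<Rightarrow> nat\<times>nat \<Rightarrow> nat\<times>nat \<Rightarrow> nat\<times>nat" where
 "sig n k x y = (\<lambda>(a,b). if (a,b) \<in> Xset n k then
     (if b = snd x then (tr (fst x) (fst y) a, snd y)
      else if b = snd y then (tr (fst x) (fst y) a, snd x) else (a,b)) else (a,b))"

locale wr =
  fixes n k :: nat
  assumes n2: "n \<ge> 2" and k2: "k \<ge> 2"
begin

abbreviation "X \<equiv> Xset n k"
abbreviation "G \<equiv> wreathG n k"
abbreviation "H \<equiv> stabH n k"
abbreviation "col j \<equiv> column n j"

lemma sig_X: "x \<in> X \<Longrightarrow> y \<in> X \<Longrightarrow> z \<in> X \<Longrightarrow> sig n k x y z \<in> X"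
  by (cases x; cases y; cases z) (auto simp: sig_def Xset_def tr_def)

lemma sig_out: "z \<notin> X \<Longrightarrow> sig n k x y z = z"
  by (cases z) (auto simp: sig_def)

lemma sig_sig: "x \<in> X \<Longrightarrow> y \<in> X \<Longrightarrow> sig n k x y (sig n k x y z) = z"
  by (cases x; cases y; cases z) (auto simp: sig_def Xset_def tr_def)

lemma sig_x: "x \<in> X \<Longrightarrow> y \<in> X \<Longrightarrow> sig n k x y x = y"
  by (cases x; cases y) (auto simp: sig_def Xset_def tr_def)

lemma sig_y: "x \<in> X \<Longrightarrow> y \<in> X \<Longrightarrow> sig n k x y y = x"
  by (cases x; cases y) (auto simp: sig_def Xset_def tr_def)

lemma sig_permutes: "x \<in> X \<Longrightarrow> y \<in> X \<Longrightarrow> sig n k x y permutes X"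
  unfolding permutes_def using sig_out sig_sig by metis

lemma sig_col: assumes "x \<in> X" "y \<in> X" "j \<in> {1..k}"
  shows "sig n k x y ` col j = col (if j = snd x then snd y else if j = snd y then snd x else j)"
proof
  show "sig n k x y ` col j \<subseteq> col (if j = snd x then snd y else if j = snd y then snd x else j)"
    using assms by (cases x; cases y) (auto simp: sig_def Xset_def tr_def column_def)
next
  show "col (if j = snd x then snd y else if j = snd y then snd x else j) \<subseteq> sig n k x y ` col j"
  proof
    fix z assume z: "z \<in> col (if j = snd x then snd y else if j = snd y then snd x else j)"
    have "sig n k x y z \<in> col j"
      using assms z by (cases x; cases y; cases z) (auto simp: sig_def Xset_def tr_def column_def)
    then show "z \<in> sig n k x y ` col j" using sig_sig[OF assms(1,2), of z]
      by (metis image_eqI)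
  qed
qed

lemma sig_G: assumes "x \<in> X" "y \<in> X" shows "sig n k x y \<in> G"
  unfolding wreathG_def using sig_permutes[OF assms] sig_col[OF assms] assms
  by (auto simp: Xset_def) 

end

context wr begin

lemma col_inj: "col j = col j' \<Longrightarrow> j = j'"
proof -
  assume e: "col j = col j'"
  have "(1,j) \<in> col j" using n2 by (auto simp: column_def)
  then have "(1,j) \<in> col j'" using e by simp
  then show "j = j'" by (auto simp: column_def)
qed

lemma col_sub: "j \<in> {1..k} \<Longrightarrow> col j \<subseteq> X"
  by (auto simp: column_def Xset_def)

lemma in_col: "x \<in> X \<Longrightarrow> x \<in> col (snd x)"
  by (auto simp: column_def Xset_def)

lemma G_perm: "g \<in> G \<Longrightarrow> g permutes X"
  by (simp add: wreathG_def)

lemma G_bij: "g \<in> G \<Longrightarrow> bij g"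
  by (rule permutes_bij[OF G_perm])

lemma G_X: "g \<in> G \<Longrightarrow> x \<in> X \<Longrightarrow> g x \<in> X"
  by (simp add: G_perm permutes_in_image)

lemma G_col: "g \<in> G \<Longrightarrow> j \<in> {1..k} \<Longrightarrow> \<exists>j'\<in>{1..k}. g ` col j = col j'"
  unfolding wreathG_def mem_Collect_eq by blast

lemma id_G: "id \<in> G"
  by (auto simp: wreathG_def permutes_id)

lemma G_comp: assumes "g \<in> G" "h \<in> G" shows "g \<circ> h \<in> G"
proof -
  have "g \<circ> h permutes X" by (rule permutes_compose[OF G_perm[OF assms(2)] G_perm[OF assms(1)]])
  moreover have "\<forall>j\<in>{1..k}. \<exists>j'\<in>{1..k}. (g \<circ> h) ` col j = col j'"
  proof
    fix j assume "j \<in> {1..k}"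
    then obtain j1 where j1: "j1 \<in> {1..k}" "h ` col j = col j1" using G_col assms by blast
    then obtain j2 where j2: "j2 \<in> {1..k}" "g ` col j1 = col j2" using G_col assms by blast
    have "(g \<circ> h) ` col j = col j2" unfolding image_comp[symmetric] j1(2) j2(2) ..
    then show "\<exists>j'\<in>{1..k}. (g \<circ> h) ` col j = col j'" using j2(1) by blast
  qed
  ultimately show ?thesis unfolding wreathG_def mem_Collect_eq by blast
qed

lemma G_inv: assumes g: "g \<in> G" shows "inv g \<in> G"
proof -
  have p: "g permutes X" using G_perm g by blast
  have ig: "inj g" by (rule permutes_inj[OF p])
  define J where "J j = (SOME j'. j' \<in> {1..k} \<and> g ` col j = col j')" for j
  have J: "J j \<in> {1..k} \<and> g ` col j = col (J j)" if "j \<in> {1..k}" for j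
  proof -
    have "\<exists>j'. j' \<in> {1..k} \<and> g ` col j = col j'" using G_col[OF g that] by blast
    then show ?thesis unfolding J_def by (rule someI_ex)
  qed
  have inj: "inj_on J {1..k}"
  proof (rule inj_onI)
    fix a b assume ab: "a \<in> {1..k}" "b \<in> {1..k}" "J a = J b"
    have "g ` col a = col (J a)" using J ab(1) by blast
    moreover have "g ` col b = col (J b)" using J ab(2) by blast
    ultimately have "g ` col a = g ` col b" using ab(3) by simp
    then have "col a = col b" using inj_image_eq_iff[OF ig] by blast
    then show "a = b" by (rule col_inj)
  qed
  have JJ: "J ` {1..k} = {1..k}"
    by (rule endo_inj_surj) (use J inj in auto)
  have "\<forall>j\<in>{1..k}. \<exists>j'\<in>{1..k}. inv g ` col j = col j'"
  proof
    fix j assume j: "j \<in> {1..k}"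
    then obtain j0 where j0: "j0 \<in> {1..k}" "j = J j0" using JJ by blast
    then have "g ` col j0 = col j" using J by blast
    then have "inv g ` col j = inv g ` g ` col j0" by simp
    also have "\<dots> = col j0" by (rule image_inv_f_f[OF ig])
    finally show "\<exists>j'\<in>{1..k}. inv g ` col j = col j'" using j0(1) by blast
  qed
  moreover have "inv g permutes X" by (rule permutes_inv[OF p])
  ultimately show ?thesis unfolding wreathG_def mem_Collect_eq by blast
qed

lemma G_samecol: assumes g: "g \<in> G" and x: "x \<in> X" and y: "y \<in> X"
  shows "snd (g x) = snd (g y) \<longleftrightarrow> snd x = snd y"
proof -
  have sx: "snd x \<in> {1..k}" using x by (auto simp: Xset_def)
  obtain j' where j': "j' \<in> {1..k}" "g ` col (snd x) = col j'" using G_col[OF g sx] by blast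
  have gx: "g x \<in> col j'" using j' in_col[OF x] by blast
  have inj: "inj g" using G_bij[OF g] bij_is_inj by blast
  show ?thesis
  proof
    assume "snd (g x) = snd (g y)"
    then have "g y \<in> col j'" using gx G_X[OF g y] by (auto simp: column_def Xset_def)
    then have "y \<in> col (snd x)" using j'(2) inj by (metis image_iff inj_def)
    then show "snd x = snd y" by (auto simp: column_def)
  next
    assume "snd x = snd y"
    then have "g y \<in> col j'" using j' in_col[OF y] by (metis image_eqI)
    then show "snd (g x) = snd (g y)" using gx by (auto simp: column_def)
  qed
qed

lemma x0_X: "(1,1) \<in> X" using n2 k2 by (auto simp: Xset_def)

lemma H_G: "h \<in> H \<Longrightarrow> h \<in> G" by (simp add: stabH_def)
lemma H_x0: "h \<in> H \<Longrightarrow> h (1,1) = (1,1)" by (simp add: stabH_def)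

lemma H_snd: assumes "h \<in> H" "x \<in> X" shows "snd (h x) = 1 \<longleftrightarrow> snd x = 1"
  using G_samecol[OF H_G[OF assms(1)] assms(2) x0_X] H_x0[OF assms(1)] by simp

lemma orbs_X: "X = orb1 n k \<union> orb2 n k \<union> orb3 n k"
  using n2 k2 by (auto simp: Xset_def orb1_def orb2_def orb3_def)

lemma orb2_X: "orb2 n k \<subseteq> X" and orb3_X: "orb3 n k \<subseteq> X"
  using n2 k2 by (auto simp: Xset_def orb2_def orb3_def)

lemma orbit1: "(\<lambda>h. h (1,1)) ` H = orb1 n k"
  using id_G by (auto simp: orb1_def stabH_def)

lemma sig_fix2: "x \<in> orb2 n k \<Longrightarrow> y \<in> orb2 n k \<Longrightarrow> sig n k x y (1,1) = (1,1)"
  by (auto simp: sig_def orb2_def tr_def Xset_def)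
lemma sig_fix3: "x \<in> orb3 n k \<Longrightarrow> y \<in> orb3 n k \<Longrightarrow> sig n k x y (1,1) = (1,1)"
  by (auto simp: sig_def orb3_def tr_def Xset_def)

lemma sig_H2: "x \<in> orb2 n k \<Longrightarrow> y \<in> orb2 n k \<Longrightarrow> sig n k x y \<in> H"
  unfolding stabH_def mem_Collect_eq using sig_fix2 sig_G[of x y] orb2_X by blast
lemma sig_H3: "x \<in> orb3 n k \<Longrightarrow> y \<in> orb3 n k \<Longrightarrow> sig n k x y \<in> H"
  unfolding stabH_def mem_Collect_eq using sig_fix3 sig_G[of x y] orb3_X by blast

lemma orbit2: assumes x: "x \<in> orb2 n k" shows "(\<lambda>h. h x) ` H = orb2 n k"
proof
  show "(\<lambda>h. h x) ` H \<subseteq> orb2 n k"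
  proof (rule image_subsetI)
    fix h assume h: "h \<in> H"
    have xX: "x \<in> X" using x orb2_X by blast
    have "h x \<in> X" using G_X H_G h xX by blast
    moreover have "snd (h x) = 1" using H_snd[OF h xX] x by (auto simp: orb2_def)
    moreover have "h x \<noteq> (1,1)"
    proof
      assume "h x = (1,1)"
      then have "h x = h (1,1)" using H_x0[OF h] by simp
      then have "x = (1,1)" using G_bij[OF H_G[OF h]] by (meson bij_is_inj injD)
      then show False using x by (auto simp: orb2_def)
    qed
    ultimately show "h x \<in> orb2 n k" by (cases "h x") (auto simp: Xset_def orb2_def)
  qed
next
  show "orb2 n k \<subseteq> (\<lambda>h. h x) ` H"
  proof
    fix y assume y: "y \<in> orb2 n k"
    have "sig n k x y \<in> H" by (rule sig_H2[OF x y])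
    moreover have "y = sig n k x y x" using sig_x[OF subsetD[OF orb2_X x] subsetD[OF orb2_X y]] by simp
    ultimately show "y \<in> (\<lambda>h. h x) ` H" unfolding image_iff by blast
  qed
qed

lemma orbit3: assumes x: "x \<in> orb3 n k" shows "(\<lambda>h. h x) ` H = orb3 n k"
proof
  show "(\<lambda>h. h x) ` H \<subseteq> orb3 n k"
  proof (rule image_subsetI)
    fix h assume h: "h \<in> H"
    have xX: "x \<in> X" using x orb3_X by blast
    have "h x \<in> X" using G_X H_G h xX by blast
    moreover have "snd (h x) \<noteq> 1" using H_snd[OF h xX] x by (auto simp: orb3_def)
    ultimately show "h x \<in> orb3 n k" by (cases "h x") (auto simp: Xset_def orb3_def)
  qed
next
  show "orb3 n k \<subseteq> (\<lambda>h. h x) ` H"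
  proof
    fix y assume y: "y \<in> orb3 n k"
    have "sig n k x y \<in> H" by (rule sig_H3[OF x y])
    moreover have "y = sig n k x y x" using sig_x[OF subsetD[OF orb3_X x] subsetD[OF orb3_X y]] by simp
    ultimately show "y \<in> (\<lambda>h. h x) ` H" unfolding image_iff by blast
  qed
qed

lemma orbit_cases: "x \<in> X \<Longrightarrow> (\<lambda>h. h x) ` H \<in> {orb1 n k, orb2 n k, orb3 n k}"
proof -
  assume "x \<in> X"
  then have "x \<in> orb1 n k \<or> x \<in> orb2 n k \<or> x \<in> orb3 n k" using orbs_X by blast
  moreover have "x \<in> orb1 n k \<Longrightarrow> x = (1,1)" by (simp add: orb1_def)
  ultimately show ?thesis using orbit1 orbit2[of x] orbit3[of x] by blast
qed

lemma orbits: "orbits_of H X = {orb1 n k, orb2 n k, orb3 n k}"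
proof -
  have a: "(2,1) \<in> orb2 n k" using n2 by (auto simp: orb2_def)
  have b: "(1,2) \<in> orb3 n k" using n2 k2 by (auto simp: orb3_def)
  have "orb1 n k = (\<lambda>h. h (1,1)) ` H" using orbit1 by simp
  then have 1: "orb1 n k \<in> orbits_of H X" unfolding orbits_of_def using x0_X by (rule image_eqI)
  have "orb2 n k = (\<lambda>h. h (2,1)) ` H" using orbit2[OF a] by simp
  then have 2: "orb2 n k \<in> orbits_of H X" unfolding orbits_of_def using subsetD[OF orb2_X a] by (rule image_eqI)
  have "orb3 n k = (\<lambda>h. h (1,2)) ` H" using orbit3[OF b] by simp
  then have 3: "orb3 n k \<in> orbits_of H X" unfolding orbits_of_def using subsetD[OF orb3_X b] by (rule image_eqI)
  have "orbits_of H X \<subseteq> {orb1 n k, orb2 n k, orb3 n k}"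
    unfolding orbits_of_def using orbit_cases by blast
  then show ?thesis using 1 2 3 by blast
qed

end

context wr begin

abbreviation "Y \<equiv> coset_space G H"

lemma G_inverses: assumes "g \<in> G" shows "g (inv g x) = x \<and> inv g (g x) = x"
  using permutes_inverses[OF G_perm[OF assms]] by blast

lemma lcoset_sub: assumes a: "a \<in> G" and b: "b \<in> G" and ab: "a (1,1) = b (1,1)"
  shows "lcoset a H \<subseteq> lcoset b H"
proof
  fix f assume "f \<in> lcoset a H"
  then obtain h where h: "h \<in> H" "f = a \<circ> h" unfolding lcoset_def by blast
  define h' where "h' = inv b \<circ> (a \<circ> h)"
  have "h' \<in> G" unfolding h'_def by (intro G_comp G_inv a b H_G h)
  moreover have "h' (1,1) = (1,1)" unfolding h'_def using H_x0[OF h(1)] ab G_inverses[OF b] by simp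
  ultimately have "h' \<in> H" by (simp add: stabH_def)
  moreover have "b \<circ> h' = f" unfolding h'_def h(2) fun_eq_iff using G_inverses[OF b] by simp
  ultimately show "f \<in> lcoset b H" unfolding lcoset_def by blast
qed

lemma lcoset_eq: "a \<in> G \<Longrightarrow> b \<in> G \<Longrightarrow> a (1,1) = b (1,1) \<Longrightarrow> lcoset a H = lcoset b H"
  using lcoset_sub by (metis subset_antisym)

lemma coset_act_lcoset: "coset_act g (lcoset c H) = lcoset (g \<circ> c) H"
  unfolding coset_act_def lcoset_def image_image by (simp add: comp_assoc)

lemma coset_act_Y: "g \<in> G \<Longrightarrow> C \<in> Y \<Longrightarrow> coset_act g C \<in> Y"
  unfolding coset_space_def using coset_act_lcoset G_comp by blast

lemma sig_inv_comp: "x \<in> X \<Longrightarrow> y \<in> X \<Longrightarrow> sig n k x y \<circ> (sig n k x y \<circ> c) = c"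
  by (simp add: fun_eq_iff sig_sig)

lemma coset_act_sig_sig: assumes "x \<in> X" "y \<in> X"
  shows "coset_act (sig n k x y) (coset_act (sig n k x y) D) = D"
  unfolding coset_act_def image_image sig_inv_comp[OF assms] by simp

lemma swap_exists: assumes C: "C \<in> Y" and E: "E \<in> Y"
  shows "\<exists>s\<in>G. coset_act s C = E \<and> coset_act s E = C \<and> bij_betw (coset_act s) Y Y"
proof -
  obtain c where c: "c \<in> G" "C = lcoset c H" using C unfolding coset_space_def by blast
  obtain e where e: "e \<in> G" "E = lcoset e H" using E unfolding coset_space_def by blast
  define x where "x = c (1,1)"
  define y where "y = e (1,1)"
  have x: "x \<in> X" unfolding x_def by (rule G_X[OF c(1) x0_X])
  have y: "y \<in> X" unfolding y_def by (rule G_X[OF e(1) x0_X])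
  define s where "s = sig n k x y"
  have s: "s \<in> G" unfolding s_def by (rule sig_G[OF x y])
  have "coset_act s C = lcoset (s \<circ> c) H" unfolding c(2) by (rule coset_act_lcoset)
  also have "\<dots> = E" unfolding e(2) using G_comp[OF s c(1)] e(1)
    by (rule lcoset_eq) (simp only: comp_apply s_def x_def[symmetric] y_def[symmetric] sig_x[OF x y])
  finally have 1: "coset_act s C = E" .
  have "coset_act s E = lcoset (s \<circ> e) H" unfolding e(2) by (rule coset_act_lcoset)
  also have "\<dots> = C" unfolding c(2) using G_comp[OF s e(1)] c(1)
    by (rule lcoset_eq) (simp only: comp_apply s_def x_def[symmetric] y_def[symmetric] sig_y[OF x y])
  finally have 2: "coset_act s E = C" .
  have 3: "bij_betw (coset_act s) Y Y"
    by (rule bij_betw_byWitness[where f'="coset_act s"])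
       (auto simp: s_def coset_act_sig_sig[OF x y] intro: coset_act_Y[OF sig_G[OF x y]])
  show ?thesis using s 1 2 3 by blast
qed

lemma diag_sym: assumes F: "diag_invariant G coset_act Y F" and C: "C \<in> Y" and E: "E \<in> Y"
  shows "F (C, E) = F (E, C)"
proof -
  obtain s where s: "s \<in> G" "coset_act s C = E" "coset_act s E = C" using swap_exists[OF C E] by blast
  have "F (coset_act s C, coset_act s E) = F (C, E)" using F s(1) C E unfolding diag_invariant_def by blast
  then show ?thesis using s by simp
qed

lemma gelfand: "gelfand_pair H G"
  unfolding gelfand_pair_def
proof (intro allI impI)
  fix F1 F2 assume FF: "diag_invariant G coset_act Y F1 \<and> diag_invariant G coset_act Y F2"
  then have F1: "diag_invariant G coset_act Y F1" and F2: "diag_invariant G coset_act Y F2" by auto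
  show "conv Y F1 F2 = conv Y F2 F1"
  proof (rule ext, clarify)
    fix C E
    show "conv Y F1 F2 (C, E) = conv Y F2 F1 (C, E)"
    proof (cases "C \<in> Y \<and> E \<in> Y")
      case False then show ?thesis unfolding conv_def by auto
    next
      case True
      then have C: "C \<in> Y" and E: "E \<in> Y" by auto
      obtain s where s: "s \<in> G" "coset_act s C = E" "coset_act s E = C" "bij_betw (coset_act s) Y Y"
        using swap_exists[OF C E] by blast
      have "conv Y F1 F2 (C, E) = (\<Sum>D\<in>Y. F1 (C, D) * F2 (D, E))" using C E by (simp add: conv_def)
      also have "\<dots> = (\<Sum>D\<in>Y. F1 (coset_act s C, coset_act s D) * F2 (coset_act s D, coset_act s E))"
        using F1 F2 s(1) C E unfolding diag_invariant_def by (intro sum.cong) auto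
      also have "\<dots> = (\<Sum>D\<in>Y. F1 (E, coset_act s D) * F2 (coset_act s D, C))" using s by simp
      also have "\<dots> = (\<Sum>D\<in>Y. F1 (E, D) * F2 (D, C))"
        by (rule sum.reindex_bij_betw[OF s(4), where g="\<lambda>D. F1 (E, D) * F2 (D, C)"])
      also have "\<dots> = (\<Sum>D\<in>Y. F2 (C, D) * F1 (D, E))"
        using diag_sym[OF F1] diag_sym[OF F2] C E by (intro sum.cong) (auto simp: mult.commute)
      also have "\<dots> = conv Y F2 F1 (C, E)" using C E by (simp add: conv_def)
      finally show ?thesis .
    qed
  qed
qed

end

lemma sum_fun_apply: "(sum f A) x = (\<Sum>a\<in>A. f a x)"
  by (induct A rule: infinite_finite_induct) auto

lemma cscale_apply[simp]: "cscale c f x = c * f x" by (simp add: cscale_def)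

context wr begin

definition colsum :: "(nat \<times> nat \<Rightarrow> complex) \<Rightarrow> nat \<Rightarrow> complex" where
  "colsum f j = (\<Sum>i=1..n. f (i, j))"

lemma sum_X: "(\<Sum>x\<in>X. f x) = (\<Sum>j=1..k. colsum f j)"
proof -
  have "(\<Sum>x\<in>{1..n}\<times>{1..k}. f x) = (\<Sum>i=1..n. \<Sum>j=1..k. f (i,j))"
    by (subst sum.cartesian_product) simp
  also have "\<dots> = (\<Sum>j=1..k. \<Sum>i=1..n. f (i,j))" by (rule sum.swap)
  finally show ?thesis unfolding Xset_def colsum_def .
qed

lemma finite_X: "finite X" by (simp add: Xset_def)

lemma card_X: "card X = n * k" by (simp add: Xset_def)

lemma inner_colconst: assumes "\<And>i j. (i, j) \<in> X \<Longrightarrow> g (i, j) = w j"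
  shows "inner_X X f g = (\<Sum>j=1..k. colsum f j * cnj (w j))"
proof -
  have "inner_X X f g = (\<Sum>x\<in>X. f x * cnj (w (snd x)))"
    unfolding inner_X_def using assms by (intro sum.cong) auto
  also have "\<dots> = (\<Sum>j=1..k. colsum (\<lambda>x. f x * cnj (w (snd x))) j)" by (rule sum_X)
  also have "\<dots> = (\<Sum>j=1..k. colsum f j * cnj (w j))"
    unfolding colsum_def by (simp add: sum_distrib_right)
  finally show ?thesis .
qed

lemma Tconst_alt: "Tconst n k = {f. \<exists>c. \<forall>x. f x = (if x \<in> X then c else 0)}"
  unfolding Tconst_def funsp_def by (auto simp: fun_eq_iff)

lemma Trest_alt: "Trest n k = {f \<in> funsp X. \<forall>j\<in>{1..k}. colsum f j = 0}"
proof (intro equalityI subsetI)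
  fix f assume f: "f \<in> Trest n k"
  then have fX: "f \<in> funsp X" by (simp add: Trest_def)
  have orth: "inner_X X f g = 0" if "g \<in> Tconst n k \<union> Tcol n k" for g
    using f that by (simp add: Trest_def)
  define g1 :: "nat \<times> nat \<Rightarrow> complex" where "g1 = (\<lambda>x. if x \<in> X then 1 else 0)"
  have "g1 \<in> Tconst n k" by (auto simp: Tconst_def funsp_def g1_def)
  then have "inner_X X f g1 = 0" using orth by blast
  moreover have "inner_X X f g1 = (\<Sum>j=1..k. colsum f j * cnj 1)"
    by (rule inner_colconst) (simp add: g1_def)
  ultimately have tot: "(\<Sum>j=1..k. colsum f j) = 0" by simp
  have eq: "colsum f j = colsum f 1" if j: "j \<in> {1..k}" for j
  proof -
    define w :: "nat \<Rightarrow> complex" where "w j' = (if j' = j then 1 else 0) - (if j' = 1 then 1 else 0)" for j'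
    define g where "g = (\<lambda>x. if x \<in> X then w (snd x) else 0)"
    have "(\<Sum>j'=1..k. w j') = 0" using j k2 by (simp add: w_def sum_subtractf)
    then have "g \<in> Tcol n k" by (auto simp: Tcol_def funsp_def g_def)
    then have "inner_X X f g = 0" using orth by blast
    moreover have "inner_X X f g = (\<Sum>j'=1..k. colsum f j' * cnj (w j'))"
      by (rule inner_colconst) (simp add: g_def)
    moreover have "(\<Sum>j'=1..k. colsum f j' * cnj (w j')) = (\<Sum>j'=1..k. (if j' = j then colsum f j' else 0) - (if j' = 1 then colsum f j' else 0))"
      by (intro sum.cong) (auto simp: w_def)
    moreover have "\<dots> = colsum f j - colsum f 1" using j k2 by (simp add: sum_subtractf)
    ultimately show ?thesis by simp
  qed
  have "(\<Sum>j=1..k. colsum f j) = (\<Sum>j=1..k. colsum f 1)" by (rule sum.cong[OF refl eq])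
  then have "(\<Sum>j=1..k. colsum f j) = of_nat k * colsum f 1" by simp
  then have c1: "colsum f 1 = 0" using tot k2 by simp
  have "\<forall>j\<in>{1..k}. colsum f j = 0" using eq c1 by metis
  then show "f \<in> {f \<in> funsp X. \<forall>j\<in>{1..k}. colsum f j = 0}" using fX by simp
next
  fix f assume f: "f \<in> {f \<in> funsp X. \<forall>j\<in>{1..k}. colsum f j = 0}"
  have "inner_X X f g = 0" if g: "g \<in> Tconst n k \<union> Tcol n k" for g
  proof -
    obtain w where "\<And>i j. (i, j) \<in> X \<Longrightarrow> g (i, j) = w j"
    proof (cases "g \<in> Tconst n k")
      case True
      then obtain c where "\<forall>x\<in>X. g x = c" by (auto simp: Tconst_def)
      then show ?thesis using that[of "\<lambda>_. c"] by blast
    next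
      case False
      then have "g \<in> Tcol n k" using g by blast
      then obtain u where "\<forall>(i, j)\<in>X. g (i, j) = u j" by (auto simp: Tcol_def)
      then show ?thesis using that[of u] by blast
    qed
    then have "inner_X X f g = (\<Sum>j=1..k. colsum f j * cnj (w j))" by (rule inner_colconst)
    also have "\<dots> = 0" using f by simp
    finally show ?thesis .
  qed
  then show "f \<in> Trest n k" using f by (simp add: Trest_def)
qed

end

context wr begin

definition "mean f = (\<Sum>x\<in>X. f x) / of_nat (n * k)"
definition "d1 f = (\<lambda>x. if x \<in> X then mean f else 0)"
definition "d2 f = (\<lambda>x. if x \<in> X then colsum f (snd x) / of_nat n - mean f else 0)"
definition "d3 f = f - d1 f - d2 f"

lemma colsum_colconst: "j \<in> {1..k} \<Longrightarrow> colsum (\<lambda>x. if x \<in> X then w (snd x) else 0) j = of_nat n * w j"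
  by (simp add: colsum_def Xset_def)

lemma colsum_add[simp]: "colsum (f + g) j = colsum f j + colsum g j"
  by (simp add: colsum_def sum.distrib)
lemma colsum_diff[simp]: "colsum (f - g) j = colsum f j - colsum g j"
  by (simp add: colsum_def sum_subtractf)

lemma nk_ne0: "(of_nat (n * k) :: complex) \<noteq> 0" using n2 k2 by simp
lemma n_ne0: "(of_nat n :: complex) \<noteq> 0" using n2 by simp

lemma d1_T: "d1 f \<in> Tconst n k"
  by (auto simp: Tconst_def funsp_def d1_def)

lemma d2_T: "d2 f \<in> Tcol n k"
proof -
  define u where "u j = colsum f j / of_nat n - mean f" for j
  have "(\<Sum>j=1..k. u j) = (\<Sum>j=1..k. colsum f j) / of_nat n - of_nat k * mean f"
    by (simp add: u_def sum_subtractf sum_divide_distrib)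
  also have "\<dots> = 0" unfolding mean_def sum_X[symmetric] using nk_ne0 n_ne0 by (simp add: field_simps)
  finally have "(\<Sum>j=1..k. u j) = 0" .
  then show ?thesis unfolding Tcol_def funsp_def d2_def u_def by auto
qed

lemma d3_T: assumes f: "f \<in> funsp X" shows "d3 f \<in> Trest n k"
proof -
  have "d3 f \<in> funsp X" using f by (auto simp: funsp_def d3_def d1_def d2_def)
  moreover have "colsum (d3 f) j = 0" if j: "j \<in> {1..k}" for j
  proof -
    have "colsum (d1 f) j = of_nat n * mean f" unfolding d1_def using colsum_colconst[OF j, of "\<lambda>_. mean f"] by simp
    moreover have "colsum (d2 f) j = of_nat n * (colsum f j / of_nat n - mean f)"
      unfolding d2_def using colsum_colconst[OF j, of "\<lambda>j. colsum f j / of_nat n - mean f"] by simp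
    ultimately show ?thesis unfolding d3_def using n_ne0 by (simp add: field_simps)
  qed
  ultimately show ?thesis unfolding Trest_alt by simp
qed

lemma d_sum: "f = d1 f + d2 f + d3 f"
  by (simp add: d3_def)

lemma d_unique:
  assumes f: "f \<in> funsp X" and g1: "g1 \<in> Tconst n k" and g2: "g2 \<in> Tcol n k" and g3: "g3 \<in> Trest n k"
    and eq: "f = g1 + g2 + g3"
  shows "g1 = d1 f \<and> g2 = d2 f \<and> g3 = d3 f"
proof -
  obtain c where c: "\<forall>x\<in>X. g1 x = c" and g1f: "g1 \<in> funsp X" using g1 by (auto simp: Tconst_def)
  have g1e: "g1 = (\<lambda>x. if x \<in> X then (\<lambda>_. c) (snd x) else 0)" using c g1f by (auto simp: funsp_def)
  obtain u where u: "(\<Sum>j=1..k. u j) = 0" "\<forall>(i, j)\<in>X. g2 (i, j) = u j" and g2f: "g2 \<in> funsp X"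
    using g2 by (auto simp: Tcol_def)
  have g2e: "g2 = (\<lambda>x. if x \<in> X then u (snd x) else 0)"
  proof
    fix x show "g2 x = (if x \<in> X then u (snd x) else 0)"
      using u(2) g2f by (cases x) (auto simp: funsp_def)
  qed
  have g3c: "\<forall>j\<in>{1..k}. colsum g3 j = 0" using g3 by (simp add: Trest_alt)
  have cs: "colsum f j = of_nat n * c + of_nat n * u j" if j: "j \<in> {1..k}" for j
  proof -
    have "colsum f j = colsum g1 j + colsum g2 j + colsum g3 j" unfolding eq by simp
    also have "\<dots> = of_nat n * c + of_nat n * u j"
      using colsum_colconst[OF j, of "\<lambda>_. c"] colsum_colconst[OF j, of u] g3c j
      by (simp add: g1e[symmetric] g2e[symmetric])
    finally show ?thesis .
  qed
  have "(\<Sum>x\<in>X. f x) = (\<Sum>j=1..k. of_nat n * c + of_nat n * u j)" unfolding sum_X using cs by simp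
  also have "\<dots> = of_nat (n * k) * c" using u(1) by (simp add: sum.distrib sum_distrib_left[symmetric])
  finally have mf: "mean f = c" unfolding mean_def using nk_ne0 by simp
  have 1: "g1 = d1 f" unfolding d1_def mf using g1e by simp
  have 2: "g2 = d2 f" unfolding d2_def mf g2e fun_eq_iff
  proof (intro allI)
    fix x show "(if x \<in> X then u (snd x) else 0) = (if x \<in> X then colsum f (snd x) / of_nat n - c else 0)"
    proof (cases "x \<in> X")
      case True
      then have "snd x \<in> {1..k}" by (auto simp: Xset_def)
      then show ?thesis using True cs n_ne0 by (simp add: field_simps)
    qed simp
  qed
  have "d3 f = f - g1 - g2" unfolding d3_def using 1 2 by simp
  also have "f - g1 - g2 = g3" unfolding eq by (simp add: algebra_simps)
  finally have 3: "g3 = d3 f" by simp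
  show ?thesis using 1 2 3 by blast
qed

lemma Tconst_funsp: "Tconst n k \<subseteq> funsp X" by (auto simp: Tconst_def)
lemma Tcol_funsp: "Tcol n k \<subseteq> funsp X" by (auto simp: Tcol_def)
lemma Trest_funsp: "Trest n k \<subseteq> funsp X" by (auto simp: Trest_def)

lemma direct_sum: "direct_sum3 (funsp X) (Tconst n k) (Tcol n k) (Trest n k)"
  unfolding direct_sum3_def
proof (intro conjI Tconst_funsp Tcol_funsp Trest_funsp ballI)
  fix f assume f: "f \<in> funsp X"
  show "\<exists>!(f1, f2, f3). f1 \<in> Tconst n k \<and> f2 \<in> Tcol n k \<and> f3 \<in> Trest n k \<and> f = f1 + f2 + f3"
  proof (rule ex1I[of _ "(d1 f, d2 f, d3 f)"])
    show "case (d1 f, d2 f, d3 f) of (f1, f2, f3) \<Rightarrow> f1 \<in> Tconst n k \<and> f2 \<in> Tcol n k \<and> f3 \<in> Trest n k \<and> f = f1 + f2 + f3"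
      using d1_T d2_T d3_T[OF f] d_sum by simp
  next
    fix p assume p: "case p of (f1, f2, f3) \<Rightarrow> f1 \<in> Tconst n k \<and> f2 \<in> Tcol n k \<and> f3 \<in> Trest n k \<and> f = f1 + f2 + f3"
    obtain g1 g2 g3 where pe: "p = (g1, g2, g3)" by (cases p) auto
    then show "p = (d1 f, d2 f, d3 f)" using d_unique[OF f, of g1 g2 g3] p by simp
  qed
qed

end

lemma indep_pts:
  assumes pts: "\<And>i i'. i \<in> I \<Longrightarrow> i' \<in> I \<Longrightarrow> \<phi> i (p i') = (if i = i' then 1 else 0)"
  shows "inj_on \<phi> I" and "cs.independent (\<phi> ` I)"
proof -
  show inj: "inj_on \<phi> I"
  proof (rule inj_onI)
    fix i i' assume ii: "i \<in> I" "i' \<in> I" "\<phi> i = \<phi> i'"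
    have "\<phi> i (p i') = 1" using ii pts[of i' i'] by simp
    then show "i = i'" using pts[OF ii(1,2)] by (simp split: if_splits)
  qed
  show "cs.independent (\<phi> ` I)"
    unfolding cs.dependent_explicit
  proof clarify
    fix t u v assume t: "finite t" "t \<subseteq> \<phi> ` I" and s: "(\<Sum>v\<in>t. cscale (u v) v) = 0" and v: "v \<in> t" "u v \<noteq> 0"
    obtain i where i: "i \<in> I" "v = \<phi> i" using v t by blast
    have "0 = (\<Sum>v\<in>t. cscale (u v) v) (p i)" using s by simp
    also have "\<dots> = (\<Sum>v'\<in>t. u v' * v' (p i))" by (simp add: sum_fun_apply)
    also have "\<dots> = (\<Sum>v'\<in>t. if v' = v then u v' else 0)"
    proof (rule sum.cong[OF refl])
      fix v' assume "v' \<in> t"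
      then obtain i' where i': "i' \<in> I" "v' = \<phi> i'" using t by blast
      have "v' (p i) = (if i' = i then 1 else 0)" using pts[OF i'(1) i(1)] i' by simp
      moreover have "(i' = i) = (v' = v)" using inj i i' by (auto dest: inj_onD)
      ultimately show "u v' * v' (p i) = (if v' = v then u v' else 0)" by simp
    qed
    also have "\<dots> = u v" using t(1) v(1) by simp
    finally show False using v(2) by simp
  qed
qed

context wr begin

definition "e x = ind {x}"
definition "b2 j = ind (col j) - ind (col 1)"
definition "b3 p = e p - e (1, snd p)"

lemma ind_apply: "ind S x = (if x \<in> S then 1 else 0)" by (simp add: ind_def)

lemma b2_pts: "j \<in> {2..k} \<Longrightarrow> j' \<in> {2..k} \<Longrightarrow> b2 j (1, j') = (if j = j' then 1 else 0)"
  using n2 by (auto simp: b2_def ind_def column_def)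

lemma b3_pts: "p \<in> {2..n}\<times>{1..k} \<Longrightarrow> p' \<in> {2..n}\<times>{1..k} \<Longrightarrow> b3 p p' = (if p = p' then 1 else 0)"
  by (cases p; cases p') (auto simp: b3_def e_def ind_def)

lemma b1_pts: "i \<in> {0::nat} \<Longrightarrow> i' \<in> {0::nat} \<Longrightarrow> (\<lambda>_. ind X) i ((\<lambda>_. (1::nat,1::nat)) i') = (if i = i' then 1 else 0)"
  using x0_X by (simp add: ind_def)

lemma B2_sub: "b2 ` {2..k} \<subseteq> Tcol n k"
proof clarify
  fix j assume j: "j \<in> {2..k}"
  define u where "u j' = (if j' = j then 1 else 0) - (if j' = 1 then 1 else (0::complex))" for j'
  have "(\<Sum>j'=1..k. u j') = 0" using j by (simp add: u_def sum_subtractf)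
  moreover have "\<forall>(i, j')\<in>X. b2 j (i, j') = u j'" by (auto simp: b2_def u_def ind_def column_def Xset_def)
  moreover have "b2 j \<in> funsp X" using j by (auto simp: b2_def ind_def column_def Xset_def funsp_def)
  ultimately show "b2 j \<in> Tcol n k" unfolding Tcol_def by blast
qed

lemma Tcol_span: "Tcol n k \<subseteq> cs.span (b2 ` {2..k})"
proof
  fix f assume f: "f \<in> Tcol n k"
  obtain u where u: "(\<Sum>j=1..k. u j) = 0" "\<forall>(i, j)\<in>X. f (i, j) = u j" and ff: "f \<in> funsp X"
    using f by (auto simp: Tcol_def)
  have "{1..k} = insert 1 {2..k}" using k2 by auto
  then have "(\<Sum>j=1..k. u j) = u 1 + (\<Sum>j=2..k. u j)" by simp
  then have "u 1 + (\<Sum>j=2..k. u j) = 0" using u(1) by simp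
  then have u1: "u 1 = - (\<Sum>j=2..k. u j)" by (rule eq_neg_iff_add_eq_0[THEN iffD2])
  have "f = (\<Sum>j\<in>{2..k}. cscale (u j) (b2 j))"
  proof
    fix x :: "nat \<times> nat"
    obtain a b where x: "x = (a, b)" by (cases x)
    have "(\<Sum>j\<in>{2..k}. cscale (u j) (b2 j)) x = (\<Sum>j\<in>{2..k}. u j * ((if a \<in> {1..n} \<and> b = j then 1 else 0) - (if a \<in> {1..n} \<and> b = 1 then 1 else 0)))"
      unfolding sum_fun_apply x by (intro sum.cong) (auto simp: b2_def ind_def column_def)
    also have "\<dots> = (if a \<in> {1..n} \<and> b \<in> {2..k} then u b else 0) - (if a \<in> {1..n} \<and> b = 1 then (\<Sum>j=2..k. u j) else 0)"
      by (simp add: right_diff_distrib sum_subtractf if_distrib[of "\<lambda>z. _ * z"] cong: if_cong) (auto intro!: sum.neutral)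
    also have "\<dots> = f x"
    proof (cases "x \<in> X")
      case True
      then have "a \<in> {1..n}" "b \<in> {1..k}" using x by (auto simp: Xset_def)
      then show ?thesis using u(2) True x u1 by auto
    next
      case False
      then show ?thesis using ff x by (auto simp: funsp_def Xset_def)
    qed
    finally show "f x = (\<Sum>j\<in>{2..k}. cscale (u j) (b2 j)) x" by simp
  qed
  also have "\<dots> \<in> cs.span (b2 ` {2..k})"
    by (intro cs.span_sum cs.span_scale cs.span_base) auto
  finally show "f \<in> cs.span (b2 ` {2..k})" .
qed

lemma dim_Tcol: "cdim (Tcol n k) = k - 1"
proof (rule cs.dim_unique[OF B2_sub Tcol_span])
  show "cs.independent (b2 ` {2..k})"
    by (rule indep_pts(2)[where p="\<lambda>j. (1, j)"]) (rule b2_pts)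
  have "inj_on b2 {2..k}"
    by (rule indep_pts(1)[where p="\<lambda>j. (1, j)"]) (rule b2_pts)
  then show "card (b2 ` {2..k}) = k - 1" by (simp add: card_image)
qed


lemma B3_sub: "b3 ` ({2..n}\<times>{1..k}) \<subseteq> Trest n k"
proof clarify
  fix i j assume ij: "i \<in> {2..n}" "j \<in> {1..k}"
  have "b3 (i, j) \<in> funsp X" using ij by (auto simp: b3_def e_def ind_def Xset_def funsp_def)
  moreover have "colsum (b3 (i, j)) j' = 0" for j'
  proof -
    have "colsum (b3 (i, j)) j' = (\<Sum>a=1..n. (if a = i \<and> j' = j then 1 else 0) - (if a = 1 \<and> j' = j then 1 else 0))"
      unfolding colsum_def by (intro sum.cong) (auto simp: b3_def e_def ind_def)
    also have "\<dots> = 0" using ij by (cases "j' = j") (simp_all add: sum_subtractf)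
    finally show ?thesis .
  qed
  ultimately show "b3 (i, j) \<in> Trest n k" unfolding Trest_alt by simp
qed

lemma Trest_span: "Trest n k \<subseteq> cs.span (b3 ` ({2..n}\<times>{1..k}))"
proof
  fix f assume f: "f \<in> Trest n k"
  then have ff: "f \<in> funsp X" and cz: "\<forall>j\<in>{1..k}. colsum f j = 0" by (auto simp: Trest_alt)
  have c1: "f (1, b) = - (\<Sum>i=2..n. f (i, b))" if b: "b \<in> {1..k}" for b
  proof -
    have "{1..n} = insert 1 {2..n}" using n2 by auto
    then have "colsum f b = f (1, b) + (\<Sum>i=2..n. f (i, b))" by (simp add: colsum_def)
    then have "f (1, b) + (\<Sum>i=2..n. f (i, b)) = 0" using cz b by simp
    then show ?thesis by (rule eq_neg_iff_add_eq_0[THEN iffD2])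
  qed
  have "f = (\<Sum>p\<in>{2..n}\<times>{1..k}. cscale (f p) (b3 p))"
  proof
    fix x :: "nat \<times> nat"
    obtain a b where x: "x = (a, b)" by (cases x)
    have "(\<Sum>p\<in>{2..n}\<times>{1..k}. cscale (f p) (b3 p)) x =
        (\<Sum>p\<in>{2..n}\<times>{1..k}. (if p = (a, b) then f p else 0) - (if a = 1 \<and> snd p = b then f p else 0))"
      unfolding sum_fun_apply x by (intro sum.cong) (auto simp: b3_def e_def ind_def)
    also have "\<dots> = (if (a, b) \<in> {2..n}\<times>{1..k} then f (a, b) else 0) -
        (\<Sum>p\<in>{2..n}\<times>{1..k}. (if a = 1 \<and> snd p = b then f p else 0))"
      by (simp add: sum_subtractf)
    also have "(\<Sum>p\<in>{2..n}\<times>{1..k}. (if a = 1 \<and> snd p = b then f p else 0)) =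
        (\<Sum>i=2..n. \<Sum>j=1..k. (if a = 1 \<and> j = b then f (i, j) else 0))"
      by (subst sum.cartesian_product) (rule sum.cong; auto)
    also have "\<dots> = (\<Sum>i=2..n. if a = 1 \<and> b \<in> {1..k} then f (i, b) else 0)"
      by (intro sum.cong refl) (auto simp: if_distrib cong: if_cong)
    also have "(if (a, b) \<in> {2..n}\<times>{1..k} then f (a, b) else 0) - \<dots> = f x"
    proof (cases "x \<in> X")
      case True
      then have ab: "a \<in> {1..n}" "b \<in> {1..k}" using x by (auto simp: Xset_def)
      show ?thesis
      proof (cases "a = 1")
        case True
        then show ?thesis using ab x c1[OF ab(2)] by simp
      next
        case False
        then show ?thesis using ab x by simp
      qed
    next
      case False
      then show ?thesis using ff x by (auto simp: funsp_def Xset_def)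
    qed
    finally show "f x = (\<Sum>p\<in>{2..n}\<times>{1..k}. cscale (f p) (b3 p)) x" by (rule sym)
  qed
  also have "\<dots> \<in> cs.span (b3 ` ({2..n}\<times>{1..k}))"
    by (intro cs.span_sum cs.span_scale cs.span_base) auto
  finally show "f \<in> cs.span (b3 ` ({2..n}\<times>{1..k}))" .
qed

lemma dim_Trest: "cdim (Trest n k) = (n - 1) * k"
proof (rule cs.dim_unique[OF B3_sub Trest_span])
  show "cs.independent (b3 ` ({2..n}\<times>{1..k}))"
    by (rule indep_pts(2)[where p="\<lambda>p. p"]) (rule b3_pts)
  have "inj_on b3 ({2..n}\<times>{1..k})"
    by (rule indep_pts(1)[where p="\<lambda>p. p"]) (rule b3_pts)
  then show "card (b3 ` ({2..n}\<times>{1..k})) = (n - 1) * k" by (simp add: card_image)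
qed

lemma dim_Tconst: "cdim (Tconst n k) = 1"
proof (rule cs.dim_unique[of "(\<lambda>_. ind X) ` {0::nat}"])
  show "(\<lambda>_. ind X) ` {0::nat} \<subseteq> Tconst n k" by (auto simp: Tconst_def ind_def funsp_def)
  show "Tconst n k \<subseteq> cs.span ((\<lambda>_. ind X) ` {0::nat})"
  proof
    fix f assume "f \<in> Tconst n k"
    then obtain c where c: "\<forall>x\<in>X. f x = c" and ff: "f \<in> funsp X" by (auto simp: Tconst_def)
    have "f = cscale c (ind X)" using c ff by (auto simp: fun_eq_iff ind_def funsp_def)
    also have "\<dots> \<in> cs.span ((\<lambda>_. ind X) ` {0::nat})" by (intro cs.span_scale cs.span_base) auto
    finally show "f \<in> cs.span ((\<lambda>_. ind X) ` {0::nat})" .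
  qed
  show "cs.independent ((\<lambda>_. ind X) ` {0::nat})"
    by (rule indep_pts(2)[where p="\<lambda>_. (1,1)"]) (rule b1_pts)
  show "card ((\<lambda>_. ind X) ` {0::nat}) = 1" by simp
qed

end

context wr begin

lemma sig_inv: "x \<in> X \<Longrightarrow> y \<in> X \<Longrightarrow> inv (sig n k x y) = sig n k x y"
  by (rule inv_unique_comp) (simp_all add: fun_eq_iff sig_sig)

lemma G_inv_X: assumes g: "g \<in> G" shows "(inv g x \<in> X) = (x \<in> X)"
proof
  assume "inv g x \<in> X"
  then have "g (inv g x) \<in> X" by (rule G_X[OF g])
  then show "x \<in> X" using G_inverses[OF g] by simp
next
  assume "x \<in> X"
  then show "inv g x \<in> X" by (rule G_X[OF G_inv[OF g]])
qed

lemma G_inv_inv: "g \<in> G \<Longrightarrow> inv (inv g) = g"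
  using G_bij by (simp add: inv_inv_eq)

lemma inner_perm: assumes g: "g \<in> G"
  shows "inner_X X (perm_act g f) (perm_act g h) = inner_X X f h"
proof -
  have b: "bij_betw (inv g) X X" using permutes_imp_bij[OF permutes_inv[OF G_perm[OF g]]] .
  show ?thesis unfolding inner_X_def perm_act_def
    by (rule sum.reindex_bij_betw[OF b, where g="\<lambda>y. f y * cnj (h y)"])
qed

lemma perm_act_inv: "g \<in> G \<Longrightarrow> perm_act g (perm_act (inv g) h) = h"
  by (simp add: perm_act_def G_inv_inv G_inverses)

lemma inner_perm2: assumes g: "g \<in> G"
  shows "inner_X X (perm_act g f) h = inner_X X f (perm_act (inv g) h)"
  using inner_perm[OF g, of f "perm_act (inv g) h"] perm_act_inv[OF g] by simp

lemma inner_add: "inner_X X (f1 + f2) h = inner_X X f1 h + inner_X X f2 h"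
  by (simp add: inner_X_def sum.distrib algebra_simps)
lemma inner_scale: "inner_X X (cscale c f) h = c * inner_X X f h"
  by (simp add: inner_X_def sum_distrib_left algebra_simps)
lemma inner_zero: "inner_X X 0 h = 0"
  by (simp add: inner_X_def)

lemma Tcol_alt: "Tcol n k = {f \<in> funsp X. (\<forall>x\<in>X. \<forall>y\<in>X. snd x = snd y \<longrightarrow> f x = f y) \<and> (\<Sum>x\<in>X. f x) = 0}"
proof (intro equalityI subsetI)
  fix f assume f: "f \<in> Tcol n k"
  obtain u where u: "(\<Sum>j=1..k. u j) = 0" "\<forall>(i, j)\<in>X. f (i, j) = u j" and ff: "f \<in> funsp X"
    using f by (auto simp: Tcol_def)
  have u2: "f (i,j) = u j" if "(i,j) \<in> X" for i j using bspec[OF u(2) that] by simp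
  have cc: "\<forall>x\<in>X. \<forall>y\<in>X. snd x = snd y \<longrightarrow> f x = f y"
  proof (intro ballI impI)
    fix x y assume xy: "x \<in> X" "y \<in> X" "snd x = snd y"
    have "f x = u (snd x)" using u2[of "fst x" "snd x"] xy(1) by simp
    moreover have "f y = u (snd y)" using u2[of "fst y" "snd y"] xy(2) by simp
    ultimately show "f x = f y" using xy(3) by simp
  qed
  have "(\<Sum>x\<in>X. f x) = (\<Sum>j=1..k. colsum f j)" by (rule sum_X)
  also have "\<dots> = (\<Sum>j=1..k. of_nat n * u j)"
  proof (rule sum.cong[OF refl])
    fix j assume j: "j \<in> {1..k}"
    have "colsum f j = (\<Sum>i=1..n. u j)" unfolding colsum_def
      by (rule sum.cong[OF refl]) (use j u2 in \<open>auto simp: Xset_def\<close>)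
    then show "colsum f j = of_nat n * u j" by simp
  qed
  also have "\<dots> = 0" using u(1) by (simp add: sum_distrib_left[symmetric])
  finally show "f \<in> {f \<in> funsp X. (\<forall>x\<in>X. \<forall>y\<in>X. snd x = snd y \<longrightarrow> f x = f y) \<and> (\<Sum>x\<in>X. f x) = 0}"
    using cc ff unfolding mem_Collect_eq by blast
next
  fix f assume f: "f \<in> {f \<in> funsp X. (\<forall>x\<in>X. \<forall>y\<in>X. snd x = snd y \<longrightarrow> f x = f y) \<and> (\<Sum>x\<in>X. f x) = 0}"
  then have ff: "f \<in> funsp X" and cc: "\<forall>x\<in>X. \<forall>y\<in>X. snd x = snd y \<longrightarrow> f x = f y" and s0: "(\<Sum>x\<in>X. f x) = 0"
    unfolding mem_Collect_eq by blast+
  define u where "u j = f (1, j)" for j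
  have fu: "\<forall>(i, j)\<in>X. f (i, j) = u j"
  proof clarify
    fix i j assume "(i, j) \<in> X"
    moreover then have "(1, j) \<in> X" using n2 by (auto simp: Xset_def)
    ultimately show "f (i, j) = u j" unfolding u_def using cc by (metis snd_conv)
  qed
  have fu2: "f (i,j) = u j" if "(i,j) \<in> X" for i j using bspec[OF fu that] by simp
  have "(\<Sum>j=1..k. of_nat n * u j) = (\<Sum>j=1..k. colsum f j)"
  proof (rule sum.cong[OF refl])
    fix j assume j: "j \<in> {1..k}"
    have "colsum f j = (\<Sum>i=1..n. u j)" unfolding colsum_def
      by (rule sum.cong[OF refl]) (use j fu2 in \<open>auto simp: Xset_def\<close>)
    then show "of_nat n * u j = colsum f j" by simp
  qed
  also have "\<dots> = 0" using s0 sum_X by simp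
  finally have "(\<Sum>j=1..k. u j) = 0" using n_ne0 by (simp add: sum_distrib_left[symmetric])
  then show "f \<in> Tcol n k" using fu ff unfolding Tcol_def mem_Collect_eq by blast
qed

lemma funspD: "f \<in> funsp S \<Longrightarrow> x \<notin> S \<Longrightarrow> f x = 0"
  unfolding funsp_def by blast

lemma perm_funsp: assumes g: "g \<in> G" and f: "f \<in> funsp X" shows "perm_act g f \<in> funsp X"
  unfolding funsp_def mem_Collect_eq
proof (intro allI impI)
  fix x assume "x \<notin> X"
  then have "inv g x \<notin> X" using G_inv_X[OF g] by simp
  then show "perm_act g f x = 0" using funspD[OF f] unfolding perm_act_def by simp
qed

lemma Tconst_fix: assumes g: "g \<in> G" and f: "f \<in> Tconst n k" shows "perm_act g f = f"
proof
  fix x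
  obtain c where c: "\<forall>x\<in>X. f x = c" and ff: "f \<in> funsp X" using f by (auto simp: Tconst_def)
  show "perm_act g f x = f x"
  proof (cases "x \<in> X")
    case True
    then have "inv g x \<in> X" using G_inv_X[OF g] by simp
    then show ?thesis using c True unfolding perm_act_def by simp
  next
    case False
    then have "inv g x \<notin> X" using G_inv_X[OF g] by simp
    then show ?thesis using funspD[OF ff] False unfolding perm_act_def by simp
  qed
qed

lemma Tconst_inv: "G_invariant_sub G (Tconst n k)"
  unfolding G_invariant_sub_def
proof (intro conjI ballI)
  show "csubspace (Tconst n k)"
    by (rule cs.subspaceI) (auto simp: Tconst_def funsp_def)
next
  fix g f assume "g \<in> G" "f \<in> Tconst n k"
  then show "perm_act g f \<in> Tconst n k" using Tconst_fix by simp
qed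

lemma Tcol_inv: "G_invariant_sub G (Tcol n k)"
  unfolding G_invariant_sub_def
proof (intro conjI ballI)
  show "csubspace (Tcol n k)"
  proof (rule cs.subspaceI)
    have "(\<Sum>j=1..k. (0::complex)) = 0 \<and> (\<forall>(i, j)\<in>X. (0::nat\<times>nat\<Rightarrow>complex) (i, j) = 0)" by simp
    moreover have "(0::nat\<times>nat\<Rightarrow>complex) \<in> funsp X" by (simp add: funsp_def)
    ultimately show "0 \<in> Tcol n k" unfolding Tcol_def by blast
  next
    fix x y assume x: "x \<in> Tcol n k" and y: "y \<in> Tcol n k"
    obtain u where u: "(\<Sum>j=1..k. u j) = 0" "\<forall>(i, j)\<in>X. x (i, j) = u j" and xf: "x \<in> funsp X"
      using x unfolding Tcol_def by blast
    obtain v where v: "(\<Sum>j=1..k. v j) = 0" "\<forall>(i, j)\<in>X. y (i, j) = v j" and yf: "y \<in> funsp X"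
      using y unfolding Tcol_def by blast
    have "(\<Sum>j=1..k. u j + v j) = 0" using u(1) v(1) by (simp add: sum.distrib)
    moreover have "\<forall>(i, j)\<in>X. (x + y) (i, j) = u j + v j"
    proof clarify
      fix i j assume ij: "(i, j) \<in> X"
      show "(x + y) (i, j) = u j + v j" using bspec[OF u(2) ij] bspec[OF v(2) ij] by simp
    qed
    moreover have "x + y \<in> funsp X" using xf yf by (simp add: funsp_def)
    ultimately show "x + y \<in> Tcol n k" unfolding Tcol_def by blast
  next
    fix c x assume x: "x \<in> Tcol n k"
    obtain u where u: "(\<Sum>j=1..k. u j) = 0" "\<forall>(i, j)\<in>X. x (i, j) = u j" and xf: "x \<in> funsp X"
      using x unfolding Tcol_def by blast
    have "(\<Sum>j=1..k. c * u j) = 0" using u(1) by (simp add: sum_distrib_left[symmetric])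
    moreover have "\<forall>(i, j)\<in>X. (cscale c x) (i, j) = c * u j"
    proof clarify
      fix i j assume ij: "(i, j) \<in> X"
      show "(cscale c x) (i, j) = c * u j" using bspec[OF u(2) ij] by simp
    qed
    moreover have "cscale c x \<in> funsp X" using xf by (simp add: funsp_def)
    ultimately show "cscale c x \<in> Tcol n k" unfolding Tcol_def by blast
  qed
next
  fix g f assume g: "g \<in> G" and f: "f \<in> Tcol n k"
  then have ff: "f \<in> funsp X" and cc: "\<forall>x\<in>X. \<forall>y\<in>X. snd x = snd y \<longrightarrow> f x = f y" and s0: "(\<Sum>x\<in>X. f x) = 0"
    unfolding Tcol_alt mem_Collect_eq by blast+
  have ig: "inv g \<in> G" by (rule G_inv[OF g])
  have "\<forall>x\<in>X. \<forall>y\<in>X. snd x = snd y \<longrightarrow> perm_act g f x = perm_act g f y"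
  proof (intro ballI impI)
    fix x y assume xy: "x \<in> X" "y \<in> X" "snd x = snd y"
    have "snd (inv g x) = snd (inv g y)" using G_samecol[OF ig xy(1,2)] xy(3) by simp
    then show "perm_act g f x = perm_act g f y"
      unfolding perm_act_def using cc G_X[OF ig xy(1)] G_X[OF ig xy(2)] by blast
  qed
  moreover have "(\<Sum>x\<in>X. perm_act g f x) = 0"
  proof -
    have b: "bij_betw (inv g) X X" using permutes_imp_bij[OF permutes_inv[OF G_perm[OF g]]] .
    have "(\<Sum>x\<in>X. perm_act g f x) = (\<Sum>x\<in>X. f x)" unfolding perm_act_def
      by (rule sum.reindex_bij_betw[OF b])
    then show ?thesis using s0 by simp
  qed
  ultimately show "perm_act g f \<in> Tcol n k" using perm_funsp[OF g ff] unfolding Tcol_alt mem_Collect_eq by blast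
qed

lemma Trest_inv: "G_invariant_sub G (Trest n k)"
  unfolding G_invariant_sub_def
proof (intro conjI ballI)
  show "csubspace (Trest n k)"
  proof (rule cs.subspaceI)
    show "0 \<in> Trest n k" by (simp add: Trest_def funsp_def inner_zero)
  next
    fix x y assume "x \<in> Trest n k" "y \<in> Trest n k"
    then show "x + y \<in> Trest n k" by (simp add: Trest_def funsp_def inner_add)
  next
    fix c x assume "x \<in> Trest n k"
    then show "cscale c x \<in> Trest n k" by (simp add: Trest_def funsp_def inner_scale)
  qed
next
  fix g f assume g: "g \<in> G" and f: "f \<in> Trest n k"
  have ig: "inv g \<in> G" by (rule G_inv[OF g])
  have "inner_X X (perm_act g f) h = 0" if h: "h \<in> Tconst n k \<union> Tcol n k" for h
  proof -
    have "perm_act (inv g) h \<in> Tconst n k \<union> Tcol n k"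
      using h Tconst_inv Tcol_inv ig unfolding G_invariant_sub_def by blast
    then have "inner_X X f (perm_act (inv g) h) = 0" using f by (simp add: Trest_def)
    then show ?thesis using inner_perm2[OF g] by simp
  qed
  then show "perm_act g f \<in> Trest n k"
    using f perm_funsp[OF g] by (simp add: Trest_def)
qed

lemma Tj_inv: "G_invariant_sub G (Tj n k j)"
  using Tconst_inv Tcol_inv Trest_inv by (simp add: Tj_def)

end

context wr begin

lemma sig_app: assumes "x \<in> X" "y \<in> X" "(a, b) \<in> X"
  shows "sig n k x y (a, b) = (if b = snd x then (tr (fst x) (fst y) a, snd y)
      else if b = snd y then (tr (fst x) (fst y) a, snd x) else (a, b))"
  using assms by (simp add: sig_def)

lemma perm_act_e: "g \<in> G \<Longrightarrow> perm_act g (e z) = e (g z)"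
  unfolding e_def by (simp add: perm_act_ind G_bij)

lemma perm_act_sig_col: assumes "x \<in> X" "y \<in> X" "j \<in> {1..k}"
  shows "perm_act (sig n k x y) (ind (col j)) = ind (col (if j = snd x then snd y else if j = snd y then snd x else j))"
  using perm_act_ind[OF G_bij[OF sig_G[OF assms(1,2)]]] sig_col[OF assms] by simp

lemma inv_mem: "G_invariant_sub G U \<Longrightarrow> g \<in> G \<Longrightarrow> f \<in> U \<Longrightarrow> perm_act g f \<in> U"
  unfolding G_invariant_sub_def by blast

lemma inv_sub: "G_invariant_sub G U \<Longrightarrow> csubspace U"
  unfolding G_invariant_sub_def by blast

lemma nonzero_elem: assumes "csubspace U" "U \<noteq> {0}" obtains f where "f \<in> U" "f \<noteq> 0"
  using assms cs.subspace_0 by blast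

lemma span_fill: assumes "csubspace U" "B \<subseteq> U" "W \<subseteq> cs.span B" "U \<subseteq> W" shows "U = W"
  using cs.span_minimal[OF assms(2,1)] assms(3,4) by blast

lemma ind_X_ne0: "ind X \<noteq> 0"
proof
  assume "ind X = 0"
  then have "ind X (1,1) = 0" by simp
  then show False using x0_X by (simp add: ind_def)
qed

lemma irr1: "irreducible_rep G (Tconst n k)"
  unfolding irreducible_rep_def
proof (intro conjI allI impI Tconst_inv)
  have "ind X \<in> Tconst n k" by (auto simp: Tconst_def ind_def funsp_def)
  then show "Tconst n k \<noteq> {0}" using ind_X_ne0 by blast
next
  fix U assume U: "G_invariant_sub G U \<and> U \<subseteq> Tconst n k"
  show "U = {0} \<or> U = Tconst n k"
  proof (cases "U = {0}")
    case False
    have sU: "csubspace U" using U inv_sub by blast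
    obtain f where f: "f \<in> U" "f \<noteq> 0" using nonzero_elem[OF sU False] by blast
    obtain c where c: "\<forall>x\<in>X. f x = c" and ff: "f \<in> funsp X" using f U by (auto simp: Tconst_def)
    have c0: "c \<noteq> 0"
    proof
      assume "c = 0"
      have "f = 0"
      proof
        fix x show "f x = 0 x" using c \<open>c = 0\<close> funspD[OF ff, of x] by (cases "x \<in> X") auto
      qed
      then show False using f by simp
    qed
    have "Tconst n k \<subseteq> U"
    proof
      fix g assume "g \<in> Tconst n k"
      then obtain d where d: "\<forall>x\<in>X. g x = d" and gf: "g \<in> funsp X" by (auto simp: Tconst_def)
      have "g = cscale (d / c) f"
      proof
        fix x show "g x = cscale (d / c) f x"
          using c d c0 funspD[OF gf, of x] funspD[OF ff, of x] by (cases "x \<in> X") auto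
      qed
      then show "g \<in> U" using cs.subspace_scale[OF sU f(1)] by simp
    qed
    then show ?thesis using U by blast
  qed simp
qed

definition "D a b = ind (col a) - ind (col b)"

lemma D_apply: "D a b (i, j) = (if i \<in> {1..n} \<and> j = a then 1 else 0) - (if i \<in> {1..n} \<and> j = b then 1 else 0)"
  by (simp add: D_def ind_def column_def)

lemma perm_act_D: assumes "x \<in> X" "y \<in> X" "a \<in> {1..k}" "b \<in> {1..k}"
  shows "perm_act (sig n k x y) (D a b) = D (if a = snd x then snd y else if a = snd y then snd x else a)
                                          (if b = snd x then snd y else if b = snd y then snd x else b)"
  unfolding D_def using perm_act_sig_col[OF assms(1,2,3)] perm_act_sig_col[OF assms(1,2,4)] by simp

lemma colpt: "c \<in> {1..k} \<Longrightarrow> (1, c) \<in> X" using n2 by (auto simp: Xset_def)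

lemma Dmove1: assumes U: "G_invariant_sub G U" and D: "D a b \<in> U" and abc: "a \<in> {1..k}" "b \<in> {1..k}" "c \<in> {1..k}"
  and ne: "c \<noteq> a" "a \<noteq> b"
  shows "D a c \<in> U"
proof (cases "c = b")
  case True then show ?thesis using D by simp
next
  case False
  have "perm_act (sig n k (1, b) (1, c)) (D a b) = D a c"
    using perm_act_D[OF colpt[OF abc(2)] colpt[OF abc(3)] abc(1,2)] ne False by simp
  then show ?thesis using inv_mem[OF U sig_G[OF colpt[OF abc(2)] colpt[OF abc(3)]] D] by simp
qed

lemma Dmove2: assumes U: "G_invariant_sub G U" and D: "D a b \<in> U" and abc: "a \<in> {1..k}" "b \<in> {1..k}" "c \<in> {1..k}"
  and ne: "c \<noteq> b" "a \<noteq> b"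
  shows "D c b \<in> U"
proof (cases "c = a")
  case True then show ?thesis using D by simp
next
  case False
  have "perm_act (sig n k (1, a) (1, c)) (D a b) = D c b"
    using perm_act_D[OF colpt[OF abc(1)] colpt[OF abc(3)] abc(1,2)] ne False by simp
  then show ?thesis using inv_mem[OF U sig_G[OF colpt[OF abc(1)] colpt[OF abc(3)]] D] by simp
qed

lemma D_neg: "D b a = - D a b" by (simp add: D_def)

lemma Dall: assumes U: "G_invariant_sub G U" and D: "D a b \<in> U" and ab: "a \<in> {1..k}" "b \<in> {1..k}" "a \<noteq> b"
  and j: "j \<in> {2..k}"
  shows "D j 1 \<in> U"
proof -
  have sU: "csubspace U" using U inv_sub by blast
  have j1: "j \<in> {1..k}" "j \<noteq> 1" using j by auto
  have one: "(1::nat) \<in> {1..k}" using k2 by simp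
  have "\<exists>x. D j x \<in> U \<and> x \<in> {1..k} \<and> x \<noteq> j"
  proof (cases "a = j")
    case True then show ?thesis using D ab by (intro exI[of _ b]) simp
  next
    case False
    show ?thesis
    proof (cases "b = j")
      case True
      have "D b a \<in> U" unfolding D_neg[of b a] by (rule cs.subspace_neg[OF sU D])
      then show ?thesis using True ab by (intro exI[of _ a]) simp
    next
      case False
      have "j \<noteq> b" using False by simp
      then have "D j b \<in> U" by (rule Dmove2[OF U D ab(1,2) j1(1) _ ab(3)])
      then show ?thesis using False ab by (intro exI[of _ b]) simp
    qed
  qed
  then obtain x where x: "D j x \<in> U" "x \<in> {1..k}" "x \<noteq> j" by blast
  show ?thesis
  proof (cases "x = 1")
    case True then show ?thesis using x by simp
  next
    case False
    have "1 \<noteq> j" using j1 by simp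
    then show ?thesis by (rule Dmove1[OF U x(1) j1(1) x(2) one _ x(3)[symmetric]])
  qed
qed

lemma irr2: "irreducible_rep G (Tcol n k)"
  unfolding irreducible_rep_def
proof (intro conjI allI impI Tcol_inv)
  have "b2 2 \<in> Tcol n k" using B2_sub k2 by auto
  moreover have "b2 2 \<noteq> 0"
  proof
    assume "b2 2 = 0"
    then have "b2 2 (1, 2) = 0" by simp
    then show False using b2_pts[of 2 2] k2 by simp
  qed
  ultimately show "Tcol n k \<noteq> {0}" by blast
next
  fix U assume U: "G_invariant_sub G U \<and> U \<subseteq> Tcol n k"
  then have Ui: "G_invariant_sub G U" and Us: "U \<subseteq> Tcol n k" by auto
  have sU: "csubspace U" using Ui inv_sub by blast
  show "U = {0} \<or> U = Tcol n k"
  proof (cases "U = {0}")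
    case False
    obtain f where f: "f \<in> U" "f \<noteq> 0" using nonzero_elem[OF sU False] by blast
    obtain u where u: "(\<Sum>j=1..k. u j) = 0" "\<forall>(i, j)\<in>X. f (i, j) = u j" and ff: "f \<in> funsp X"
      using f Us unfolding Tcol_def by blast
    have u2: "f (i, j) = u j" if "(i, j) \<in> X" for i j using bspec[OF u(2) that] by simp
    have "\<exists>a\<in>{1..k}. \<exists>b\<in>{1..k}. u a \<noteq> u b"
    proof (rule ccontr)
      assume nex: "\<not> (\<exists>a\<in>{1..k}. \<exists>b\<in>{1..k}. u a \<noteq> u b)"
      have one: "(1::nat) \<in> {1..k}" using k2 by simp
      have eq: "u j = u 1" if "j \<in> {1..k}" for j using nex that one by blast
      have "(\<Sum>j=1..k. u j) = (\<Sum>j=1..k. u 1)" by (rule sum.cong[OF refl eq])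
      then have "of_nat k * u 1 = 0" using u(1) by simp
      then have u1: "u 1 = 0" using k2 by simp
      have "f = 0"
      proof
        fix x :: "nat \<times> nat"
        show "f x = 0 x"
        proof (cases "x \<in> X")
          case True
          then have "snd x \<in> {1..k}" by (auto simp: Xset_def)
          then show ?thesis using u2[of "fst x" "snd x"] True eq[OF \<open>snd x \<in> {1..k}\<close>] u1 by simp
        next
          case False then show ?thesis using funspD[OF ff] by simp
        qed
      qed
      then show False using f by simp
    qed
    then obtain a b where ab: "a \<in> {1..k}" "b \<in> {1..k}" "u a \<noteq> u b" by blast
    have neq: "a \<noteq> b" using ab by blast
    define s where "s = sig n k (1, a) (1, b)"
    have sG: "s \<in> G" unfolding s_def by (rule sig_G[OF colpt[OF ab(1)] colpt[OF ab(2)]])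
    have sinv: "inv s = s" unfolding s_def by (rule sig_inv[OF colpt[OF ab(1)] colpt[OF ab(2)]])
    have "f - perm_act s f = cscale (u a - u b) (D a b)"
    proof
      fix x :: "nat \<times> nat"
      obtain i j where x: "x = (i, j)" by (cases x)
      show "(f - perm_act s f) x = cscale (u a - u b) (D a b) x"
      proof (cases "x \<in> X")
        case True
        then have ij: "i \<in> {1..n}" "j \<in> {1..k}" using x by (auto simp: Xset_def)
        have sx: "s x = (i, if j = a then b else if j = b then a else j)"
          unfolding s_def x using sig_app[OF colpt[OF ab(1)] colpt[OF ab(2)] True[unfolded x]]
          by (simp add: tr_def)
        have "s x \<in> X" using sx ij ab by (auto simp: Xset_def)
        then have "f (s x) = u (if j = a then b else if j = b then a else j)" using u2 sx by simp
        then show ?thesis using u2[OF True[unfolded x]] ij neq unfolding x perm_act_def sinv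
          by (auto simp: D_apply sx[unfolded x])
      next
        case False
        have "s x = x" unfolding s_def by (rule sig_out[OF False])
        moreover have "D a b x = 0" using False x ab by (auto simp: D_apply Xset_def)
        ultimately show ?thesis using funspD[OF ff False] unfolding perm_act_def sinv by simp
      qed
    qed
    moreover have "f - perm_act s f \<in> U"
      using cs.subspace_diff[OF sU f(1) inv_mem[OF Ui sG f(1)]] .
    ultimately have "cscale (1 / (u a - u b)) (cscale (u a - u b) (D a b)) \<in> U"
      using cs.subspace_scale[OF sU] by metis
    then have DU: "D a b \<in> U" using ab(3) by (simp add: cscale_def)
    have "b2 ` {2..k} \<subseteq> U"
    proof
      fix v assume "v \<in> b2 ` {2..k}"
      then obtain j where j: "j \<in> {2..k}" "v = b2 j" by blast
      have "D j 1 \<in> U" by (rule Dall[OF Ui DU ab(1,2) neq j(1)])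
      then show "v \<in> U" using j by (simp add: b2_def D_def)
    qed
    then have "U = Tcol n k" by (rule span_fill[OF sU _ Tcol_span Us])
    then show ?thesis by simp
  qed simp
qed

end

context wr begin

definition "E p q = e p - e q"

lemma E_apply: "E p q z = (if z = p then 1 else 0) - (if z = q then 1 else 0)"
  by (simp add: E_def e_def ind_def)

lemma E_move: "G_invariant_sub G U \<Longrightarrow> E p q \<in> U \<Longrightarrow> g \<in> G \<Longrightarrow> E (g p) (g q) \<in> U"
  using inv_mem[of U g "E p q"] by (simp add: E_def perm_act_e)

lemma Eall: assumes U: "G_invariant_sub G U" and EU: "E p q \<in> U" and p: "p \<in> X" and q: "q \<in> X"
  and pq: "p \<noteq> q" "snd p = snd q" and t: "t \<in> {2..n}\<times>{1..k}"
  shows "b3 t \<in> U"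
proof -
  obtain a b where tab: "t = (a, b)" by (cases t)
  have a: "a \<in> {2..n}" and b: "b \<in> {1..k}" using t tab by auto
  have tX: "t \<in> X" using a b tab by (auto simp: Xset_def)
  define s1 where "s1 = sig n k p t"
  have s1G: "s1 \<in> G" unfolding s1_def by (rule sig_G[OF p tX])
  have s1p: "s1 p = t" unfolding s1_def by (rule sig_x[OF p tX])
  define q1 where "q1 = s1 q"
  have E1: "E t q1 \<in> U" using E_move[OF U EU s1G] s1p q1_def by simp
  have q1X: "q1 \<in> X" unfolding q1_def by (rule G_X[OF s1G q])
  have q1t: "q1 \<noteq> t"
  proof
    assume "q1 = t"
    then have "s1 q = s1 p" using s1p q1_def by simp
    then show False using pq(1) G_bij[OF s1G] by (metis bij_is_inj injD)
  qed
  have sq1: "snd q1 = b"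
    using G_samecol[OF s1G p q] pq(2) s1p tab q1_def by simp
  show ?thesis
  proof (cases "q1 = (1, b)")
    case True
    then show ?thesis using E1 tab by (simp add: E_def b3_def)
  next
    case False
    have oX: "(1, b) \<in> X" by (rule colpt[OF b])
    define s2 where "s2 = sig n k q1 (1, b)"
    have s2G: "s2 \<in> G" unfolding s2_def by (rule sig_G[OF q1X oX])
    have fq1: "fst q1 \<noteq> a" using q1t sq1 tab by (metis prod.collapse)
    have "s2 t = (tr (fst q1) 1 a, b)" unfolding s2_def tab
      using sig_app[OF q1X oX tX[unfolded tab]] sq1 by simp
    also have "\<dots> = t" using fq1 a tab by (auto simp: tr_def)
    finally have s2t: "s2 t = t" .
    have s2q: "s2 q1 = (1, b)" unfolding s2_def by (rule sig_x[OF q1X oX])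
    have "E (s2 t) (s2 q1) \<in> U" by (rule E_move[OF U E1 s2G])
    then show ?thesis using s2t s2q tab by (simp add: E_def b3_def)
  qed
qed

lemma irr3: "irreducible_rep G (Trest n k)"
  unfolding irreducible_rep_def
proof (intro conjI allI impI Trest_inv)
  have t: "(2::nat, 1::nat) \<in> {2..n}\<times>{1..k}" using n2 k2 by auto
  have "b3 (2::nat, 1::nat) \<in> Trest n k" using B3_sub t by blast
  moreover have "b3 (2::nat, 1::nat) \<noteq> 0"
  proof
    assume "b3 (2::nat, 1::nat) = 0"
    then have "b3 (2::nat, 1::nat) (2, 1) = 0" by simp
    then show False using b3_pts[OF t t] by simp
  qed
  ultimately show "Trest n k \<noteq> {0}" by blast
next
  fix U assume U: "G_invariant_sub G U \<and> U \<subseteq> Trest n k"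
  then have Ui: "G_invariant_sub G U" and Us: "U \<subseteq> Trest n k" by auto
  have sU: "csubspace U" using Ui inv_sub by blast
  show "U = {0} \<or> U = Trest n k"
  proof (cases "U = {0}")
    case False
    obtain f where f: "f \<in> U" "f \<noteq> 0" using nonzero_elem[OF sU False] by blast
    have ff: "f \<in> funsp X" and cz: "\<forall>j\<in>{1..k}. colsum f j = 0"
      using f Us unfolding Trest_alt by auto
    have "\<exists>p\<in>X. f p \<noteq> 0"
    proof (rule ccontr)
      assume "\<not> (\<exists>p\<in>X. f p \<noteq> 0)"
      then have "f = 0" using funspD[OF ff] by (intro ext) (metis zero_fun_def)
      then show False using f by simp
    qed
    then obtain i j where p: "(i, j) \<in> X" "f (i, j) \<noteq> 0" by auto
    have ij: "i \<in> {1..n}" "j \<in> {1..k}" using p by (auto simp: Xset_def)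
    have "\<exists>i'\<in>{1..n}. f (i', j) \<noteq> f (i, j)"
    proof (rule ccontr)
      assume "\<not> (\<exists>i'\<in>{1..n}. f (i', j) \<noteq> f (i, j))"
      then have "colsum f j = (\<Sum>i'=1..n. f (i, j))" unfolding colsum_def by (intro sum.cong) auto
      then have "colsum f j = of_nat n * f (i, j)" by simp
      then show False using cz ij p(2) n_ne0 by simp
    qed
    then obtain i' where i': "i' \<in> {1..n}" "f (i', j) \<noteq> f (i, j)" by blast
    define pp where "pp = (i, j)"
    define qq where "qq = (i', j)"
    have ppX: "pp \<in> X" using p pp_def by simp
    have qqX: "qq \<in> X" using i' ij qq_def by (auto simp: Xset_def)
    have pq: "pp \<noteq> qq" using i' pp_def qq_def by auto
    define s where "s = sig n k pp qq"
    have sG: "s \<in> G" unfolding s_def by (rule sig_G[OF ppX qqX])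
    have sinv: "inv s = s" unfolding s_def by (rule sig_inv[OF ppX qqX])
    have "f - perm_act s f = cscale (f pp - f qq) (E pp qq)"
    proof
      fix z :: "nat \<times> nat"
      obtain a b where z: "z = (a, b)" by (cases z)
      show "(f - perm_act s f) z = cscale (f pp - f qq) (E pp qq) z"
      proof (cases "z \<in> X")
        case True
        have sz: "s z = (if b = j then (tr i i' a, j) else (a, b))"
          unfolding s_def z using sig_app[OF ppX qqX True[unfolded z]] by (simp add: pp_def qq_def)
        show ?thesis
        proof (cases "z = pp")
          case True
          then have "s z = qq" using sz z by (simp add: pp_def qq_def tr_def)
          then show ?thesis using True pq unfolding perm_act_def sinv by (simp add: E_apply)
        next
          case False
          show ?thesis
          proof (cases "z = qq")
            case True
            then have "s z = pp" using sz z by (simp add: pp_def qq_def tr_def)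
            then show ?thesis using True pq unfolding perm_act_def sinv by (simp add: E_apply)
          next
            case False
            have "s z = z" using sz z \<open>z \<noteq> pp\<close> False by (auto simp: pp_def qq_def tr_def)
            then show ?thesis using False \<open>z \<noteq> pp\<close> unfolding perm_act_def sinv by (simp add: E_apply)
          qed
        qed
      next
        case False
        have "s z = z" unfolding s_def by (rule sig_out[OF False])
        moreover have "z \<noteq> pp" "z \<noteq> qq" using False ppX qqX by auto
        ultimately show ?thesis using funspD[OF ff False] unfolding perm_act_def sinv by (simp add: E_apply)
      qed
    qed
    moreover have "f - perm_act s f \<in> U"
      using cs.subspace_diff[OF sU f(1) inv_mem[OF Ui sG f(1)]] .
    ultimately have "cscale (1 / (f pp - f qq)) (cscale (f pp - f qq) (E pp qq)) \<in> U"
      using cs.subspace_scale[OF sU] by metis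
    moreover have "f pp - f qq \<noteq> 0" using i' pp_def qq_def by simp
    ultimately have EU: "E pp qq \<in> U" by (simp add: cscale_def)
    have "b3 ` ({2..n}\<times>{1..k}) \<subseteq> U"
    proof
      fix v assume "v \<in> b3 ` ({2..n}\<times>{1..k})"
      then obtain t where t: "t \<in> {2..n}\<times>{1..k}" "v = b3 t" by blast
      show "v \<in> U" using Eall[OF Ui EU ppX qqX pq _ t(1)] t(2) pp_def qq_def by simp
    qed
    then have "U = Trest n k" by (rule span_fill[OF sU _ Trest_span Us])
    then show ?thesis by simp
  qed simp
qed

end

context wr begin

lemma noniso: assumes g: "g \<in> G" and Wfix: "\<forall>f\<in>W. perm_act g f = f"
  and f0: "f0 \<in> V" "perm_act g f0 \<noteq> f0" and Vi: "G_invariant_sub G V"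
  shows "\<not> isomorphic_rep G V W \<and> \<not> isomorphic_rep G W V"
proof
  show "\<not> isomorphic_rep G V W"
  proof
    assume "isomorphic_rep G V W"
    then obtain L where L: "bij_betw L V W" "\<forall>g\<in>G. \<forall>f\<in>V. L (perm_act g f) = perm_act g (L f)"
      unfolding isomorphic_rep_def by blast
    have gf: "perm_act g f0 \<in> V" by (rule inv_mem[OF Vi g f0(1)])
    have "L f0 \<in> W" using L(1) f0(1) bij_betwE by blast
    then have "L (perm_act g f0) = L f0" using L(2) g f0(1) Wfix by simp
    then have "perm_act g f0 = f0" using L(1) gf f0(1) bij_betw_imp_inj_on inj_onD by metis
    then show False using f0(2) by simp
  qed
  show "\<not> isomorphic_rep G W V"
  proof
    assume "isomorphic_rep G W V"
    then obtain L where L: "bij_betw L W V" "\<forall>g\<in>G. \<forall>f\<in>W. L (perm_act g f) = perm_act g (L f)"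
      unfolding isomorphic_rep_def by blast
    obtain w where w: "w \<in> W" "L w = f0" using L(1) f0(1) by (metis bij_betw_imp_surj_on imageE)
    have "perm_act g f0 = L (perm_act g w)" using L(2) g w by simp
    also have "\<dots> = f0" using Wfix w by simp
    finally show False using f0(2) by simp
  qed
qed

definition "tt = sig n k (1,1) (2,1)"
lemma tX: "(2::nat, 1::nat) \<in> X" using n2 k2 by (auto simp: Xset_def)
lemma tt_G: "tt \<in> G" unfolding tt_def by (rule sig_G[OF x0_X tX])
lemma tt_inv: "inv tt = tt" unfolding tt_def by (rule sig_inv[OF x0_X tX])

lemma tt_Tcol_fix: "\<forall>f\<in>Tcol n k. perm_act tt f = f"
proof
  fix f assume f: "f \<in> Tcol n k"
  then have ff: "f \<in> funsp X" and cc: "\<forall>x\<in>X. \<forall>y\<in>X. snd x = snd y \<longrightarrow> f x = f y"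
    unfolding Tcol_alt mem_Collect_eq by blast+
  show "perm_act tt f = f"
  proof
    fix x show "perm_act tt f x = f x"
    proof (cases "x \<in> X")
      case True
      have "snd (tt x) = snd x"
        unfolding tt_def using sig_app[OF x0_X tX, of "fst x" "snd x"] True by (auto simp: tr_def)
      moreover have "tt x \<in> X" by (rule G_X[OF tt_G True])
      ultimately show ?thesis unfolding perm_act_def tt_inv using cc True by blast
    next
      case False
      have "tt x = x" unfolding tt_def by (rule sig_out[OF False])
      then show ?thesis unfolding perm_act_def tt_inv by simp
    qed
  qed
qed

lemma tt_moves: "b3 (2::nat, 1::nat) \<in> Trest n k \<and> perm_act tt (b3 (2::nat, 1::nat)) \<noteq> b3 (2::nat, 1::nat)"
proof
  have t: "(2::nat, 1::nat) \<in> {2..n}\<times>{1..k}" using n2 k2 by auto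
  then show "b3 (2::nat, 1::nat) \<in> Trest n k" using B3_sub by blast
  have "perm_act tt (b3 (2::nat,1::nat)) = e (tt (2,1)) - e (tt (1,1))"
    unfolding b3_def by (simp add: perm_act_e[OF tt_G])
  also have "\<dots> = e (1,1) - e (2,1)" unfolding tt_def using sig_x[OF x0_X tX] sig_y[OF x0_X tX] by simp
  finally have "perm_act tt (b3 (2::nat,1::nat)) (2,1) = -1" by (simp add: e_def ind_def)
  moreover have "b3 (2::nat,1::nat) (2,1) = 1" using b3_pts[OF t t] by simp
  ultimately show "perm_act tt (b3 (2::nat, 1::nat)) \<noteq> b3 (2::nat, 1::nat)" by (metis one_neq_neg_one)
qed

definition "sc = sig n k (1,1) (1,2)"
lemma cX: "(1::nat, 2::nat) \<in> X" using n2 k2 by (auto simp: Xset_def)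
lemma sc_G: "sc \<in> G" unfolding sc_def by (rule sig_G[OF x0_X cX])

lemma sc_moves: "D 1 2 \<in> Tcol n k \<and> perm_act sc (D 1 2) \<noteq> D 1 2"
proof
  have "b2 2 \<in> Tcol n k" using B2_sub k2 by auto
  then have "- b2 2 \<in> Tcol n k" using Tcol_inv unfolding G_invariant_sub_def using cs.subspace_neg by blast
  then show "D 1 2 \<in> Tcol n k" by (simp add: b2_def D_def)
  have o: "(1::nat) \<in> {1..k}" "(2::nat) \<in> {1..k}" using k2 by auto
  have "perm_act sc (D 1 2) = D 2 1" unfolding sc_def using perm_act_D[OF x0_X cX o] by simp
  then have "perm_act sc (D 1 2) (1,1) = -1" using n2 by (simp add: D_apply)
  moreover have "D 1 2 (1,1) = 1" using n2 by (simp add: D_apply)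
  ultimately show "perm_act sc (D 1 2) \<noteq> D 1 2" by (metis one_neq_neg_one)
qed

lemma noniso_all: "\<forall>i\<in>{1, 2, 3}. \<forall>j\<in>{1, 2, 3}. i \<noteq> j \<longrightarrow> \<not> isomorphic_rep G (Tj n k i) (Tj n k j)"
proof -
  have a12: "\<not> isomorphic_rep G (Tcol n k) (Tconst n k) \<and> \<not> isomorphic_rep G (Tconst n k) (Tcol n k)"
    using sc_moves by (intro noniso[OF sc_G _ _ _ Tcol_inv]) (auto simp: Tconst_fix[OF sc_G])
  have a13: "\<not> isomorphic_rep G (Trest n k) (Tconst n k) \<and> \<not> isomorphic_rep G (Tconst n k) (Trest n k)"
    using tt_moves by (intro noniso[OF tt_G _ _ _ Trest_inv]) (auto simp: Tconst_fix[OF tt_G])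
  have a23: "\<not> isomorphic_rep G (Trest n k) (Tcol n k) \<and> \<not> isomorphic_rep G (Tcol n k) (Trest n k)"
    using tt_moves tt_Tcol_fix by (intro noniso[OF tt_G _ _ _ Trest_inv]) auto
  show ?thesis using a12 a13 a23 by (auto simp: Tj_def)
qed

end

context wr begin

definition "R1 = {(x, y). x \<in> X \<and> y \<in> X \<and> x = y}"
definition "R2 = {(x, y). x \<in> X \<and> y \<in> X \<and> x \<noteq> y \<and> snd x = snd y}"
definition "R3 = {(x, y). x \<in> X \<and> y \<in> X \<and> snd x \<noteq> snd y}"
definition "Rj i = (if i = 1 then R1 else if i = 2 then R2 else R3)"

lemma sig_x0_G: "x \<in> X \<Longrightarrow> sig n k (1,1) x \<in> G" by (rule sig_G[OF x0_X])

lemma G_inj: "g \<in> G \<Longrightarrow> g a = g b \<Longrightarrow> a = b"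
  using G_bij by (metis bij_is_inj injD)

lemma orbit_set:
  assumes i: "i \<in> {1, 2, 3}"
  shows "{(g (1,1), g y) | g y. g \<in> G \<and> y \<in> orbj n k i} = Rj i"
proof (intro equalityI subsetI)
  fix p assume "p \<in> {(g (1,1), g y) | g y. g \<in> G \<and> y \<in> orbj n k i}"
  then obtain g y where p: "p = (g (1,1), g y)" and g: "g \<in> G" and y: "y \<in> orbj n k i" by blast
  have yX: "y \<in> X" using y orb2_X orb3_X x0_X by (auto simp: orbj_def orb1_def split: if_splits)
  have gx: "g (1,1) \<in> X" by (rule G_X[OF g x0_X])
  have gy: "g y \<in> X" by (rule G_X[OF g yX])
  have sc: "snd (g (1,1)) = snd (g y) \<longleftrightarrow> snd (1::nat,1::nat) = snd y" by (rule G_samecol[OF g x0_X yX])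
  have inj: "g (1,1) = g y \<longleftrightarrow> (1,1) = y" using G_inj[OF g] by blast
  consider "i = 1" | "i = 2" | "i = 3" using i by blast
  then show "p \<in> Rj i"
  proof cases
    case 1 then show ?thesis using y p gx by (simp add: Rj_def R1_def orbj_def orb1_def)
  next
    case 2
    then have "y \<in> orb2 n k" using y by (simp add: orbj_def)
    then have "snd y = 1" "y \<noteq> (1,1)" by (auto simp: orb2_def)
    then show ?thesis using 2 p gx gy sc inj by (simp add: Rj_def R2_def)
  next
    case 3
    then have "y \<in> orb3 n k" using y by (simp add: orbj_def)
    then have "snd y \<noteq> 1" by (auto simp: orb3_def)
    then show ?thesis using 3 p gx gy sc by (simp add: Rj_def R3_def)
  qed
next
  fix p assume p: "p \<in> Rj i"
  obtain x y where pxy: "p = (x, y)" by (cases p)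
  have xy: "x \<in> X" "y \<in> X" using p pxy by (auto simp: Rj_def R1_def R2_def R3_def split: if_splits)
  define g where "g = sig n k (1,1) x"
  have g: "g \<in> G" unfolding g_def by (rule sig_x0_G[OF xy(1)])
  have gx0: "g (1,1) = x" unfolding g_def by (rule sig_x[OF x0_X xy(1)])
  have gx: "g x = (1,1)" unfolding g_def by (rule sig_y[OF x0_X xy(1)])
  define y0 where "y0 = g y"
  have gy0: "g y0 = y" unfolding y0_def g_def by (rule sig_sig[OF x0_X xy(1)])
  have y0X: "y0 \<in> X" unfolding y0_def by (rule G_X[OF g xy(2)])
  have sc: "snd (g x) = snd (g y) \<longleftrightarrow> snd x = snd y" by (rule G_samecol[OF g xy])
  have inj: "g x = g y \<longleftrightarrow> x = y" using G_inj[OF g] by blast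
  have "y0 \<in> orbj n k i"
  proof -
    consider "i = 1" | "i = 2" | "i = 3" using i by blast
    then show ?thesis
    proof cases
      case 1 then have "x = y" using p pxy by (simp add: Rj_def R1_def)
      then show ?thesis using 1 gx y0_def by (simp add: orbj_def orb1_def)
    next
      case 2 then have "x \<noteq> y" "snd x = snd y" using p pxy by (auto simp: Rj_def R2_def)
      then have "snd y0 = 1" "y0 \<noteq> (1,1)" using sc inj gx y0_def by auto
      then show ?thesis using 2 y0X by (cases y0) (auto simp: orbj_def orb2_def Xset_def)
    next
      case 3 then have "snd x \<noteq> snd y" using p pxy by (auto simp: Rj_def R3_def)
      then have "snd y0 \<noteq> 1" using sc gx y0_def by auto
      then show ?thesis using 3 y0X by (cases y0) (auto simp: orbj_def orb3_def Xset_def)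
    qed
  qed
  then show "p \<in> {(g (1,1), g y) | g y. g \<in> G \<and> y \<in> orbj n k i}"
    using pxy gx0 gy0 g by blast
qed

lemma Rj_sub: "Rj i \<subseteq> X \<times> X" by (auto simp: Rj_def R1_def R2_def R3_def)

lemma Cmat_reduce: assumes i: "i \<in> {1, 2, 3}"
  shows "Cmat n k i j = (\<Sum>p\<in>Rj i. cnj (Psi G H X (1,1) (Tj n k j) p))"
proof -
  have fin: "finite (X \<times> X)" using finite_X by simp
  have "Cmat n k i j = (\<Sum>p\<in>X \<times> X. (if p \<in> Rj i then 1 else 0) * cnj (Psi G H X (1,1) (Tj n k j) p))"
    unfolding Cmat_def inner_XX_def orbit_char_def orbit_set[OF i] ..
  also have "\<dots> = (\<Sum>p\<in>X \<times> X. if p \<in> Rj i then cnj (Psi G H X (1,1) (Tj n k j) p) else 0)"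
    by (intro sum.cong) auto
  also have "\<dots> = (\<Sum>p\<in>(X \<times> X) \<inter> Rj i. cnj (Psi G H X (1,1) (Tj n k j) p))"
    by (rule sum.inter_restrict[OF fin, symmetric])
  also have "(X \<times> X) \<inter> Rj i = Rj i" using Rj_sub by blast
  finally show ?thesis .
qed

lemma card_col: "x \<in> X \<Longrightarrow> card (col (snd x)) = n"
  by (simp add: column_def)

lemma card_R1: "card R1 = n * k"
proof -
  have "R1 = (\<lambda>x. (x, x)) ` X" by (auto simp: R1_def)
  moreover have "inj_on (\<lambda>x. (x, x)) X" by (auto simp: inj_on_def)
  ultimately show ?thesis using card_X by (simp add: card_image)
qed

lemma card_R2: "card R2 = n * k * (n - 1)"
proof -
  have "R2 = Sigma X (\<lambda>x. col (snd x) - {x})"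
    by (auto simp: R2_def column_def Xset_def)
  moreover have "card (col (snd x) - {x}) = n - 1" if "x \<in> X" for x
    using that card_col[OF that] in_col[OF that] by (simp add: column_def)
  ultimately show ?thesis using finite_X card_X by (simp add: column_def)
qed

lemma card_R3: "card R3 = n * k * (n * (k - 1))"
proof -
  have "R3 = Sigma X (\<lambda>x. X - col (snd x))"
    by (auto simp: R3_def column_def Xset_def)
  moreover have "card (X - col (snd x)) = n * k - n" if "x \<in> X" for x
  proof -
    have sub: "col (snd x) \<subseteq> X" using that by (auto simp: column_def Xset_def)
    have "card (X - col (snd x)) = card X - card (col (snd x))"
      by (rule card_Diff_subset[OF finite_subset[OF sub finite_X] sub])
    then show ?thesis using card_col[OF that] card_X by simp
  qed
  ultimately have "card R3 = (\<Sum>x\<in>X. n * k - n)" using finite_X by (simp add: Xset_def)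
  also have "\<dots> = n * k * (n * (k - 1))" using card_X by (simp add: diff_mult_distrib2 mult.commute)
  finally show ?thesis .
qed

end

context wr begin

definition Phi :: "complex \<Rightarrow> complex \<Rightarrow> complex \<Rightarrow> nat \<times> nat \<Rightarrow> (nat \<times> nat \<Rightarrow> complex)" where
  "Phi \<alpha> \<beta> \<gamma> y = cscale \<alpha> (ind X) + cscale \<beta> (ind (col (snd y))) + cscale \<gamma> (ind {y})"

lemma G_img_X: "b \<in> G \<Longrightarrow> b ` X = X"
  using permutes_image G_perm by blast

lemma G_img_col: assumes b: "b \<in> G" and y: "y \<in> X" shows "b ` col (snd y) = col (snd (b y))"
proof -
  have "snd y \<in> {1..k}" using y by (auto simp: Xset_def)
  then obtain j' where j': "b ` col (snd y) = col j'" using G_col[OF b] by blast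
  have "b y \<in> col j'" using j' in_col[OF y] by blast
  then have "j' = snd (b y)" by (auto simp: column_def)
  then show ?thesis using j' by simp
qed

lemma perm_Phi: assumes b: "b \<in> G" and y: "y \<in> X"
  shows "perm_act b (Phi \<alpha> \<beta> \<gamma> y) = Phi \<alpha> \<beta> \<gamma> (b y)"
  unfolding Phi_def using perm_act_ind[OF G_bij[OF b]] G_img_X[OF b] G_img_col[OF b y] by simp

lemma inner_ind: "inner_X X (ind A) (ind B) = of_nat (card (X \<inter> (A \<inter> B)))"
proof -
  have "inner_X X (ind A) (ind B) = (\<Sum>x\<in>X. if x \<in> A \<inter> B then 1 else 0)"
    unfolding inner_X_def ind_def by (intro sum.cong) auto
  also have "\<dots> = (\<Sum>x\<in>X \<inter> (A \<inter> B). 1)" by (rule sum.inter_restrict[OF finite_X, symmetric])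
  finally show ?thesis by simp
qed

lemma inner_add_right: "inner_X X f (g1 + g2) = inner_X X f g1 + inner_X X f g2"
  by (simp add: inner_X_def sum.distrib algebra_simps)
lemma inner_scale_right: "inner_X X f (cscale c g) = cnj c * inner_X X f g"
  by (simp add: inner_X_def sum_distrib_left algebra_simps)

lemma col_X: "x \<in> X \<Longrightarrow> col (snd x) \<subseteq> X" by (auto simp: column_def Xset_def)

lemma i1: "inner_X X (ind X) (ind X) = of_nat (n * k)"
  by (simp add: inner_ind card_X)
lemma i2: "x \<in> X \<Longrightarrow> inner_X X (ind X) (ind (col (snd x))) = of_nat n"
  by (simp add: inner_ind Int_absorb1[OF col_X] card_col)
lemma i2': "x \<in> X \<Longrightarrow> inner_X X (ind (col (snd x))) (ind X) = of_nat n"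
  by (simp add: inner_ind Int_absorb1[OF col_X] Int_absorb2[OF col_X] card_col)
lemma i3: "x \<in> X \<Longrightarrow> inner_X X (ind X) (ind {x}) = 1"
  by (simp add: inner_ind)
lemma i3': "x \<in> X \<Longrightarrow> inner_X X (ind {x}) (ind X) = 1"
  by (simp add: inner_ind)
lemma i4: assumes "x \<in> X" "y \<in> X"
  shows "inner_X X (ind (col (snd y))) (ind (col (snd x))) = (if snd x = snd y then of_nat n else 0)"
proof (cases "snd x = snd y")
  case True
  then show ?thesis using assms by (simp add: inner_ind Int_absorb1[OF col_X] card_col)
next
  case False
  then have "col (snd y) \<inter> col (snd x) = {}" by (auto simp: column_def)
  then show ?thesis using False by (simp add: inner_ind)
qed
lemma i5: assumes "x \<in> X" "y \<in> X"
  shows "inner_X X (ind (col (snd y))) (ind {x}) = (if snd x = snd y then 1 else 0)"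
  using assms in_col[OF assms(1)] by (auto simp: inner_ind column_def Int_insert_right)
lemma i5': assumes "x \<in> X" "y \<in> X"
  shows "inner_X X (ind {y}) (ind (col (snd x))) = (if snd x = snd y then 1 else 0)"
  using assms in_col[OF assms(2)] by (auto simp: inner_ind column_def Int_insert_left)
lemma i6: assumes "x \<in> X" "y \<in> X"
  shows "inner_X X (ind {y}) (ind {x}) = (if x = y then 1 else 0)"
  using assms by (auto simp: inner_ind)

lemma inner_Phi: assumes x: "x \<in> X" and y: "y \<in> X"
  shows "inner_X X (Phi a b c y) (Phi a' b' c' x) =
     a * cnj a' * of_nat (n * k) + a * cnj b' * of_nat n + a * cnj c'
   + b * cnj a' * of_nat n + b * cnj b' * (if snd x = snd y then of_nat n else 0) + b * cnj c' * (if snd x = snd y then 1 else 0)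
   + c * cnj a' + c * cnj b' * (if snd x = snd y then 1 else 0) + c * cnj c' * (if x = y then 1 else 0)"
  unfolding Phi_def inner_add inner_add_right inner_scale inner_scale_right
  using i1 i2[OF x] i2'[OF y] i3[OF x] i3'[OF y] i4[OF x y] i5[OF x y] i5'[OF x y] i6[OF x y]
  by (simp add: algebra_simps)

end

context wr begin

lemma rep_props: assumes z: "z \<in> X" shows "rep_of G (1,1) z \<in> G \<and> rep_of G (1,1) z (1,1) = z"
proof -
  have "\<exists>g. g \<in> G \<and> g (1,1) = z" using sig_x0_G[OF z] sig_x[OF x0_X z] by blast
  then show ?thesis unfolding rep_of_def by (rule someI_ex)
qed

lemma perm_comp: assumes a: "a \<in> G" and b: "b \<in> G"
  shows "perm_act a (perm_act (inv a \<circ> b) f) = perm_act b f"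
proof
  fix x
  have "inv (inv a \<circ> b) = inv b \<circ> inv (inv a)"
    by (rule o_inv_distrib[OF bij_imp_bij_inv[OF G_bij[OF a]] G_bij[OF b]])
  then have "inv (inv a \<circ> b) = inv b \<circ> a" using G_inv_inv[OF a] by simp
  then show "perm_act a (perm_act (inv a \<circ> b) f) x = perm_act b f x"
    unfolding perm_act_def using G_inverses[OF a] by simp
qed

lemma inner_cscale2: "inner_X X (cscale c f) (cscale c g) = c * cnj c * inner_X X f g"
  by (simp add: inner_scale inner_scale_right)

lemma H_fix_Phi: assumes h: "h \<in> H" shows "perm_act h (Phi a b c (1,1)) = Phi a b c (1,1)"
  using perm_Phi[OF H_G[OF h] x0_X] H_x0[OF h] by simp

lemma psi_generic:
  assumes sT: "csubspace T"
    and uniq: "\<And>f. f \<in> T \<Longrightarrow> (\<forall>h\<in>H. perm_act h f = f) \<Longrightarrow> \<exists>c. f = cscale c (Phi a b c0 (1,1))"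
    and mem: "Phi a b c0 (1,1) \<in> T"
    and Nval: "inner_X X (Phi a b c0 (1,1)) (Phi a b c0 (1,1)) = of_real N" and Npos: "N > 0"
    and x: "x \<in> X" and y: "y \<in> X"
  shows "Psi G H X (1,1) T (x, y) = of_nat (cdim T) / of_nat (card X) * (inner_X X (Phi a b c0 y) (Phi a b c0 x) / of_real N)"
proof -
  define \<Phi> where "\<Phi> = Phi a b c0"
  define \<theta>0 where "\<theta>0 = cscale (of_real (1 / sqrt N)) (\<Phi> (1,1))"
  have "\<theta>0 \<in> T" unfolding \<theta>0_def \<Phi>_def by (rule cs.subspace_scale[OF sT mem])
  moreover have "\<forall>h\<in>H. perm_act h \<theta>0 = \<theta>0" unfolding \<theta>0_def \<Phi>_def using H_fix_Phi by simp
  moreover have "inner_X X \<theta>0 \<theta>0 = 1"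
  proof -
    have "inner_X X \<theta>0 \<theta>0 = of_real (1 / sqrt N) * of_real (1 / sqrt N) * of_real N"
      unfolding \<theta>0_def inner_cscale2 \<Phi>_def Nval by simp
    also have "\<dots> = of_real ((1 / sqrt N) * (1 / sqrt N) * N)" by (simp only: of_real_mult)
    also have "(1 / sqrt N) * (1 / sqrt N) * N = 1"
    proof -
      have s: "sqrt N * sqrt N = N" using Npos by (simp add: real_sqrt_mult_self)
      have "(1 / sqrt N) * (1 / sqrt N) * N = N / (sqrt N * sqrt N)" by (simp add: field_simps)
      also have "\<dots> = 1" using s Npos by simp
      finally show ?thesis .
    qed
    finally show ?thesis by simp
  qed
  ultimately have ex: "\<exists>\<theta>. \<theta> \<in> T \<and> (\<forall>h\<in>H. perm_act h \<theta> = \<theta>) \<and> inner_X X \<theta> \<theta> = 1" by blast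
  define \<theta> where "\<theta> = theta H X T"
  have th: "\<theta> \<in> T \<and> (\<forall>h\<in>H. perm_act h \<theta> = \<theta>) \<and> inner_X X \<theta> \<theta> = 1"
    unfolding \<theta>_def theta_def by (rule someI_ex[OF ex])
  then obtain c where c: "\<theta> = cscale c (\<Phi> (1,1))" using uniq \<Phi>_def by blast
  have cc: "c * cnj c * of_real N = 1" using th c Nval unfolding \<Phi>_def by (simp add: inner_cscale2)
  have Nne: "(of_real N :: complex) \<noteq> 0" using Npos by simp
  have cc': "c * cnj c = 1 / of_real N" using cc Nne by (simp add: field_simps)
  define ra where "ra = rep_of G (1,1) x"
  define rb where "rb = rep_of G (1,1) y"
  have ra: "ra \<in> G" "ra (1,1) = x" using rep_props[OF x] ra_def by auto
  have rb: "rb \<in> G" "rb (1,1) = y" using rep_props[OF y] rb_def by auto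
  have "inner_X X (perm_act (inv ra \<circ> rb) \<theta>) \<theta> = inner_X X (perm_act ra (perm_act (inv ra \<circ> rb) \<theta>)) (perm_act ra \<theta>)"
    by (rule inner_perm[OF ra(1), symmetric])
  also have "\<dots> = inner_X X (perm_act rb \<theta>) (perm_act ra \<theta>)" using perm_comp[OF ra(1) rb(1)] by simp
  also have "\<dots> = inner_X X (cscale c (\<Phi> y)) (cscale c (\<Phi> x))"
    unfolding c \<Phi>_def using perm_Phi[OF rb(1) x0_X] perm_Phi[OF ra(1) x0_X] ra(2) rb(2) by simp
  also have "\<dots> = inner_X X (\<Phi> y) (\<Phi> x) / of_real N" unfolding inner_cscale2 cc' by simp
  finally have eq: "inner_X X (perm_act (inv ra \<circ> rb) \<theta>) \<theta> = inner_X X (\<Phi> y) (\<Phi> x) / of_real N" .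
  have "Psi G H X (1,1) T (x, y) = psi H X T (inv ra \<circ> rb)" unfolding Psi_def ra_def rb_def using x y by simp
  also have "\<dots> = of_nat (cdim T) / of_nat (card X) * inner_X X (perm_act (inv ra \<circ> rb) \<theta>) \<theta>"
    unfolding psi_def \<theta>_def ..
  finally show ?thesis unfolding eq \<Phi>_def .
qed

lemma Hinv_const: assumes hf: "\<forall>h\<in>H. perm_act h f = f"
  shows "z \<in> orb2 n k \<Longrightarrow> f z = f (2,1)" and "z \<in> orb3 n k \<Longrightarrow> f z = f (1,2)"
proof -
  have a: "(2,1) \<in> orb2 n k" using n2 by (auto simp: orb2_def)
  have b: "(1,2) \<in> orb3 n k" using n2 k2 by (auto simp: orb3_def)
  show "f z = f (2,1)" if z: "z \<in> orb2 n k"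
  proof -
    define h where "h = sig n k (2,1) z"
    have h: "h \<in> H" unfolding h_def by (rule sig_H2[OF a z])
    have aX: "(2,1) \<in> X" using a orb2_X by blast
    have zX: "z \<in> X" using z orb2_X by blast
    have "perm_act h f z = f (h z)" unfolding perm_act_def h_def using sig_inv[OF aX zX] by simp
    also have "h z = (2,1)" unfolding h_def by (rule sig_y[OF aX zX])
    finally show ?thesis using hf h by simp
  qed
  show "f z = f (1,2)" if z: "z \<in> orb3 n k"
  proof -
    define h where "h = sig n k (1,2) z"
    have h: "h \<in> H" unfolding h_def by (rule sig_H3[OF b z])
    have aX: "(1,2) \<in> X" using b orb3_X by blast
    have zX: "z \<in> X" using z orb3_X by blast
    have "perm_act h f z = f (h z)" unfolding perm_act_def h_def using sig_inv[OF aX zX] by simp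
    also have "h z = (1,2)" unfolding h_def by (rule sig_y[OF aX zX])
    finally show ?thesis using hf h by simp
  qed
qed

lemma Phi_apply: "Phi a b c y z = a * (if z \<in> X then 1 else 0) + b * (if z \<in> col (snd y) then 1 else 0) + c * (if z = y then 1 else 0)"
  by (simp add: Phi_def ind_def)

end

context wr begin

lemma col1: "z \<in> col (snd (1::nat, 1::nat)) \<longleftrightarrow> z \<in> X \<and> snd z = 1"
  using k2 by (auto simp: column_def Xset_def)

lemma Phi_x0: "Phi a b c (1,1) z = (if z \<in> X then a + (if snd z = 1 then b else 0) + (if z = (1,1) then c else 0) else 0)"
  unfolding Phi_apply col1 using x0_X by auto

lemma Phi_x0': "Phi a b c (Suc 0, Suc 0) z = (if z \<in> X then a + (if snd z = 1 then b else 0) + (if z = (1,1) then c else 0) else 0)"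
  using Phi_x0[of a b c z] by simp

lemmas Phi_x0s = Phi_x0 Phi_x0'

lemma k_ne: "(of_nat k :: complex) \<noteq> 0" "(of_nat k :: complex) \<noteq> 1" "(of_nat n :: complex) \<noteq> 0" "(of_nat n :: complex) \<noteq> 1"
  using n2 k2 by auto

lemma uniq1: "f \<in> Tconst n k \<Longrightarrow> \<exists>c. f = cscale c (Phi 1 0 0 (1,1))"
proof -
  assume f: "f \<in> Tconst n k"
  then obtain c where c: "\<forall>x\<in>X. f x = c" and ff: "f \<in> funsp X" by (auto simp: Tconst_def)
  have "f = cscale c (Phi 1 0 0 (1,1))"
  proof
    fix z show "f z = cscale c (Phi 1 0 0 (1,1)) z"
      using c funspD[OF ff, of z] by (cases "z \<in> X") (auto simp: Phi_x0s)
  qed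
  then show ?thesis by blast
qed

lemma mem1: "Phi 1 0 0 (1,1) \<in> Tconst n k"
  unfolding Tconst_def funsp_def by (auto simp: Phi_x0s)

lemma Nval1: "inner_X X (Phi 1 0 0 (1,1)) (Phi 1 0 0 (1,1)) = of_real (real (n * k))"
  using inner_Phi[OF x0_X x0_X, of 1 0 0 1 0 0] by simp

lemma Psi1: assumes "x \<in> X" "y \<in> X"
  shows "Psi G H X (1,1) (Tconst n k) (x, y) = 1 / of_nat (n * k)"
proof -
  have "Psi G H X (1,1) (Tconst n k) (x, y) = of_nat 1 / of_nat (n * k) * (of_nat (n * k) / of_real (real (n * k)))"
    using psi_generic[OF inv_sub[OF Tconst_inv] uniq1 mem1 Nval1 _ assms] n2 k2
      inner_Phi[OF assms(1,2), of 1 0 0 1 0 0] dim_Tconst card_X by simp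
  then show ?thesis using n2 k2 by simp
qed

lemma uniq2: assumes f: "f \<in> Tcol n k" and hf: "\<forall>h\<in>H. perm_act h f = f"
  shows "\<exists>c. f = cscale c (Phi (-1) (of_nat k) 0 (1,1))"
proof -
  obtain u where u: "(\<Sum>j=1..k. u j) = 0" "\<forall>(i, j)\<in>X. f (i, j) = u j" and ff: "f \<in> funsp X"
    using f unfolding Tcol_def by blast
  have u2: "f (i, j) = u j" if "(i, j) \<in> X" for i j using bspec[OF u(2) that] by simp
  define C where "C = f (1,2)"
  have uj: "u j = C" if "j \<in> {2..k}" for j
  proof -
    have "(1, j) \<in> orb3 n k" using that n2 by (auto simp: orb3_def)
    then have "f (1, j) = C" unfolding C_def by (rule Hinv_const(2)[OF hf])
    moreover have "(1, j) \<in> X" using that n2 by (auto simp: Xset_def)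
    ultimately show ?thesis using u2 by simp
  qed
  have "{1..k} = insert 1 {2..k}" using k2 by auto
  then have "u 1 + (\<Sum>j=2..k. u j) = 0" using u(1) by simp
  moreover have "(\<Sum>j=2..k. u j) = of_nat (k - 1) * C" using uj by simp
  ultimately have u1: "u 1 = - (of_nat k - 1) * C" using k2 by (simp add: of_nat_diff algebra_simps eq_neg_iff_add_eq_0)
  have "f = cscale (- C) (Phi (-1) (of_nat k) 0 (1,1))"
  proof
    fix z :: "nat \<times> nat"
    obtain i j where z: "z = (i, j)" by (cases z)
    show "f z = cscale (- C) (Phi (-1) (of_nat k) 0 (1,1)) z"
    proof (cases "z \<in> X")
      case True
      then have j: "j \<in> {1..k}" using z by (auto simp: Xset_def)
      show ?thesis
      proof (cases "j = 1")
        case True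
        then show ?thesis using u2 \<open>z \<in> X\<close> z u1 by (simp add: Phi_x0s algebra_simps)
      next
        case False
        then have "j \<in> {2..k}" using j by auto
        then show ?thesis using u2 \<open>z \<in> X\<close> z uj False by (simp add: Phi_x0s)
      qed
    next
      case False
      then show ?thesis using funspD[OF ff False] by (simp add: Phi_x0s)
    qed
  qed
  then show ?thesis by blast
qed

lemma mem2: "Phi (-1) (of_nat k) 0 (1,1) \<in> Tcol n k"
proof -
  define u :: "nat \<Rightarrow> complex" where "u j = (if j = 1 then of_nat k - 1 else -1)" for j
  have "{1..k} = insert 1 {2..k}" using k2 by auto
  then have "(\<Sum>j=1..k. u j) = u 1 + (\<Sum>j=2..k. u j)" by simp
  also have "(\<Sum>j=2..k. u j) = (\<Sum>j=2..k. -1)" by (intro sum.cong) (auto simp: u_def)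
  also have "\<dots> = - of_nat (k - 1)" by simp
  finally have "(\<Sum>j=1..k. u j) = 0" using k2 by (simp add: u_def of_nat_diff)
  moreover have "\<forall>(i, j)\<in>X. Phi (-1) (of_nat k) 0 (1,1) (i, j) = u j" by (auto simp: Phi_x0s u_def)
  moreover have "Phi (-1) (of_nat k) 0 (1,1) \<in> funsp X" by (simp add: funsp_def Phi_x0s)
  ultimately show ?thesis unfolding Tcol_def by blast
qed

lemma Nval2: "inner_X X (Phi (-1) (of_nat k) 0 (1,1)) (Phi (-1) (of_nat k) 0 (1,1)) = of_real (real (n * k * (k - 1)))"
  using inner_Phi[OF x0_X x0_X, of "-1" "of_nat k" 0 "-1" "of_nat k" 0] k2
  by (simp add: of_nat_diff algebra_simps power2_eq_square)

lemma Psi2: assumes xy: "x \<in> X" "y \<in> X"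
  shows "Psi G H X (1,1) (Tcol n k) (x, y) = (if snd x = snd y then (of_nat k - 1) / (of_nat n * of_nat k) else - 1 / (of_nat n * of_nat k))"
proof -
  have pos: "real (n * k * (k - 1)) > 0" using n2 k2 by simp
  have e1: "Psi G H X (1,1) (Tcol n k) (x, y) = of_nat (k - 1) / of_nat (n * k) *
     (inner_X X (Phi (-1) (of_nat k) 0 y) (Phi (-1) (of_nat k) 0 x) / of_real (real (n * k * (k - 1))))"
    using psi_generic[OF inv_sub[OF Tcol_inv] uniq2 mem2 Nval2 pos xy] dim_Tcol card_X by simp
  have e2: "inner_X X (Phi (-1) (of_nat k) 0 y) (Phi (-1) (of_nat k) 0 x) =
      of_nat (n * k) - 2 * of_nat k * of_nat n + (if snd x = snd y then of_nat k * of_nat k * of_nat n else 0)"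
    using inner_Phi[OF xy, of "-1" "of_nat k" 0 "-1" "of_nat k" 0] by (simp add: algebra_simps)
  have km: "(of_nat k :: complex) - 1 \<noteq> 0" using k_ne by simp
  have ofr: "(of_real (real (n * k * (k - 1))) :: complex) = of_nat n * of_nat k * (of_nat k - 1)"
    using k2 by (simp add: of_nat_diff)
  have okm: "(of_nat (k - 1) :: complex) = of_nat k - 1" using k2 by (simp add: of_nat_diff)
  show ?thesis
  proof (cases "snd x = snd y")
    case True
    then show ?thesis unfolding e1 e2 ofr okm using k_ne km by (simp add: field_simps)
  next
    case False
    then show ?thesis unfolding e1 e2 ofr okm using k_ne km by (simp add: field_simps)
  qed
qed

lemma uniq3: assumes f: "f \<in> Trest n k" and hf: "\<forall>h\<in>H. perm_act h f = f"
  shows "\<exists>c. f = cscale c (Phi 0 (-1) (of_nat n) (1,1))"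
proof -
  have ff: "f \<in> funsp X" and cz: "\<forall>j\<in>{1..k}. colsum f j = 0" using f unfolding Trest_alt by auto
  define B where "B = f (2,1)"
  define C where "C = f (1,2)"
  have fo2: "f (i, 1) = B" if "i \<in> {2..n}" for i
    unfolding B_def by (rule Hinv_const(1)[OF hf]) (use that in \<open>auto simp: orb2_def\<close>)
  have fo3: "f (i, j) = C" if "i \<in> {1..n}" "j \<in> {2..k}" for i j
    unfolding C_def by (rule Hinv_const(2)[OF hf]) (use that in \<open>auto simp: orb3_def\<close>)
  have "colsum f 2 = (\<Sum>i=1..n. C)" unfolding colsum_def by (intro sum.cong) (use fo3 k2 in auto)
  then have "of_nat n * C = 0" using cz k2 by simp
  then have C0: "C = 0" using k_ne by simp
  have "{1..n} = insert 1 {2..n}" using n2 by auto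
  then have "colsum f 1 = f (1,1) + (\<Sum>i=2..n. f (i, 1))" by (simp add: colsum_def)
  also have "(\<Sum>i=2..n. f (i, 1)) = (\<Sum>i=2..n. B)" by (intro sum.cong) (use fo2 in auto)
  finally have "f (1,1) + of_nat (n - 1) * B = 0" using cz k2 by simp
  then have f11: "f (1,1) = - (of_nat n - 1) * B" using n2 by (simp add: of_nat_diff algebra_simps eq_neg_iff_add_eq_0)
  have "f = cscale (- B) (Phi 0 (-1) (of_nat n) (1,1))"
  proof
    fix z :: "nat \<times> nat"
    obtain i j where z: "z = (i, j)" by (cases z)
    show "f z = cscale (- B) (Phi 0 (-1) (of_nat n) (1,1)) z"
    proof (cases "z \<in> X")
      case True
      then have ij: "i \<in> {1..n}" "j \<in> {1..k}" using z by (auto simp: Xset_def)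
      show ?thesis
      proof (cases "j = 1")
        case True
        show ?thesis
        proof (cases "i = 1")
          case True
          then show ?thesis using \<open>j = 1\<close> z \<open>z \<in> X\<close> f11 by (simp add: Phi_x0s algebra_simps)
        next
          case False
          then have "i \<in> {2..n}" using ij by auto
          then show ?thesis using \<open>j = 1\<close> z \<open>z \<in> X\<close> fo2 False by (simp add: Phi_x0s)
        qed
      next
        case False
        then have "j \<in> {2..k}" using ij by auto
        then show ?thesis using z \<open>z \<in> X\<close> fo3[OF ij(1)] C0 False by (simp add: Phi_x0s)
      qed
    next
      case False
      then show ?thesis using funspD[OF ff False] by (simp add: Phi_x0s)
    qed
  qed
  then show ?thesis by blast
qed

lemma mem3: "Phi 0 (-1) (of_nat n) (1,1) \<in> Trest n k"
proof -
  have "Phi 0 (-1) (of_nat n) (1,1) \<in> funsp X" by (simp add: funsp_def Phi_x0s)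
  moreover have "colsum (Phi 0 (-1) (of_nat n) (1,1)) j = 0" if j: "j \<in> {1..k}" for j
  proof (cases "j = 1")
    case True
    have "colsum (Phi 0 (-1) (of_nat n) (1,1)) j = (\<Sum>i=1..n. -1 + (if i = 1 then of_nat n else 0))"
      unfolding colsum_def using True j by (intro sum.cong) (auto simp: Phi_x0s Xset_def)
    also have "\<dots> = 0" using n2 by (simp add: sum_subtractf)
    finally show ?thesis .
  next
    case False
    have "colsum (Phi 0 (-1) (of_nat n) (1,1)) j = (\<Sum>i=1..n. 0)"
      unfolding colsum_def using False j by (intro sum.cong) (auto simp: Phi_x0s)
    then show ?thesis by simp
  qed
  ultimately show ?thesis unfolding Trest_alt by blast
qed

lemma Nval3: "inner_X X (Phi 0 (-1) (of_nat n) (1,1)) (Phi 0 (-1) (of_nat n) (1,1)) = of_real (real (n * (n - 1)))"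
  using inner_Phi[OF x0_X x0_X, of 0 "-1" "of_nat n" 0 "-1" "of_nat n"] n2
  by (simp add: of_nat_diff algebra_simps power2_eq_square)

lemma Psi3: assumes xy: "x \<in> X" "y \<in> X"
  shows "Psi G H X (1,1) (Trest n k) (x, y) = (if x = y then (of_nat n - 1) / of_nat n else if snd x = snd y then - 1 / of_nat n else 0)"
proof -
  have pos: "real (n * (n - 1)) > 0" using n2 by simp
  have e1: "Psi G H X (1,1) (Trest n k) (x, y) = of_nat ((n - 1) * k) / of_nat (n * k) *
     (inner_X X (Phi 0 (-1) (of_nat n) y) (Phi 0 (-1) (of_nat n) x) / of_real (real (n * (n - 1))))"
    using psi_generic[OF inv_sub[OF Trest_inv] uniq3 mem3 Nval3 pos xy] dim_Trest card_X by simp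
  have e2: "inner_X X (Phi 0 (-1) (of_nat n) y) (Phi 0 (-1) (of_nat n) x) =
      (if snd x = snd y then - of_nat n else 0) + (if x = y then of_nat n * of_nat n else 0)"
    using inner_Phi[OF xy, of 0 "-1" "of_nat n" 0 "-1" "of_nat n"]
    by (cases "snd x = snd y"; cases "x = y") (simp_all add: algebra_simps)
  have nm: "(of_nat n :: complex) - 1 \<noteq> 0" using k_ne by simp
  have ofr: "(of_real (real (n * (n - 1))) :: complex) = of_nat n * (of_nat n - 1)"
    using n2 by (simp add: of_nat_diff)
  have onm: "(of_nat ((n - 1) * k) :: complex) = (of_nat n - 1) * of_nat k" using n2 by (simp add: of_nat_diff)
  show ?thesis
  proof (cases "x = y")
    case True
    then show ?thesis unfolding e1 e2 ofr onm using k_ne nm by (simp add: field_simps)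
  next
    case False
    show ?thesis
    proof (cases "snd x = snd y")
      case True
      then show ?thesis unfolding e1 e2 ofr onm using False k_ne nm by (simp add: field_simps)
    next
      case False
      then show ?thesis unfolding e1 e2 ofr onm using \<open>x \<noteq> y\<close> k_ne nm by simp
    qed
  qed
qed

end

context wr begin

lemma Cval: assumes i: "i \<in> {1, 2, 3}"
  and v: "\<And>x y. (x, y) \<in> Rj i \<Longrightarrow> Psi G H X (1,1) (Tj n k j) (x, y) = v"
  shows "Cmat n k i j = of_nat (card (Rj i)) * cnj v"
proof -
  have "Cmat n k i j = (\<Sum>p\<in>Rj i. cnj v)"
    unfolding Cmat_reduce[OF i] by (intro sum.cong refl) (use v in auto)
  then show ?thesis by simp
qed

lemma RX: "(x, y) \<in> Rj i \<Longrightarrow> x \<in> X \<and> y \<in> X"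
  using Rj_sub by blast

lemma card_Rj: "card (Rj (1::nat)) = n * k" "card (Rj (2::nat)) = n * k * (n - 1)" "card (Rj (3::nat)) = n * k * (n * (k - 1))"
  using card_R1 card_R2 card_R3 by (simp_all add: Rj_def)

lemma Cmat_all: "\<forall>i\<in>{1, 2, 3}. \<forall>j\<in>{1, 2, 3}. Cmat n k i j = of_int (Mmat n k i j)"
proof -
  have Kn: "(of_nat k :: complex) \<noteq> 0" "(of_nat n :: complex) \<noteq> 0" using k_ne by auto
  have okm: "(of_nat (k - 1) :: complex) = of_nat k - 1" using k2 by (simp add: of_nat_diff)
  have onm: "(of_nat (n - 1) :: complex) = of_nat n - 1" using n2 by (simp add: of_nat_diff)
  have T1: "Tj n k 1 = Tconst n k" "Tj n k 2 = Tcol n k" "Tj n k 3 = Trest n k" by (simp_all add: Tj_def)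
  have r1: "x \<in> X \<and> y \<in> X \<and> x = y" if "(x, y) \<in> Rj (1::nat)" for x y using that by (simp add: Rj_def R1_def)
  have r2: "x \<in> X \<and> y \<in> X \<and> x \<noteq> y \<and> snd x = snd y" if "(x, y) \<in> Rj (2::nat)" for x y using that by (simp add: Rj_def R2_def)
  have r3: "x \<in> X \<and> y \<in> X \<and> snd x \<noteq> snd y" if "(x, y) \<in> Rj (3::nat)" for x y using that by (simp add: Rj_def R3_def)
  have c11: "Cmat n k 1 1 = of_nat (card (Rj (1::nat))) * cnj (1 / of_nat (n * k))"
    by (rule Cval) (use r1 Psi1 T1 in auto)
  have c21: "Cmat n k 2 1 = of_nat (card (Rj (2::nat))) * cnj (1 / of_nat (n * k))"
    by (rule Cval) (use r2 Psi1 T1 in auto)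
  have c31: "Cmat n k 3 1 = of_nat (card (Rj (3::nat))) * cnj (1 / of_nat (n * k))"
    by (rule Cval) (use r3 Psi1 T1 in auto)
  have c12: "Cmat n k 1 2 = of_nat (card (Rj (1::nat))) * cnj ((of_nat k - 1) / (of_nat n * of_nat k))"
    by (rule Cval) (use r1 Psi2 T1 in auto)
  have c22: "Cmat n k 2 2 = of_nat (card (Rj (2::nat))) * cnj ((of_nat k - 1) / (of_nat n * of_nat k))"
    by (rule Cval) (use r2 Psi2 T1 in auto)
  have c32: "Cmat n k 3 2 = of_nat (card (Rj (3::nat))) * cnj (- 1 / (of_nat n * of_nat k))"
    by (rule Cval) (use r3 Psi2 T1 in auto)
  have c13: "Cmat n k 1 3 = of_nat (card (Rj (1::nat))) * cnj ((of_nat n - 1) / of_nat n)"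
    by (rule Cval) (use r1 Psi3 T1 in auto)
  have c23: "Cmat n k 2 3 = of_nat (card (Rj (2::nat))) * cnj (- 1 / of_nat n)"
    by (rule Cval) (use r2 Psi3 T1 in auto)
  have c33: "Cmat n k 3 3 = of_nat (card (Rj (3::nat))) * cnj 0"
    by (rule Cval) (use r3 Psi3 T1 in auto)
  have e11: "Cmat n k 1 1 = of_int (Mmat n k 1 1)"
    unfolding c11[unfolded card_Rj] Mmat_def Let_def using Kn n2 k2 by (simp add: of_nat_diff field_simps)
  have e12: "Cmat n k 1 2 = of_int (Mmat n k 1 2)"
    unfolding c12[unfolded card_Rj] Mmat_def Let_def using Kn n2 k2 by (simp add: of_nat_diff field_simps)
  have e13: "Cmat n k 1 3 = of_int (Mmat n k 1 3)"
    unfolding c13[unfolded card_Rj] Mmat_def Let_def using Kn n2 k2 by (simp add: of_nat_diff field_simps)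
  have e21: "Cmat n k 2 1 = of_int (Mmat n k 2 1)"
    unfolding c21[unfolded card_Rj] Mmat_def Let_def using Kn n2 k2 by (simp add: of_nat_diff field_simps)
  have e22: "Cmat n k 2 2 = of_int (Mmat n k 2 2)"
    unfolding c22[unfolded card_Rj] Mmat_def Let_def using Kn n2 k2 by (simp add: of_nat_diff field_simps)
  have e23: "Cmat n k 2 3 = of_int (Mmat n k 2 3)"
    unfolding c23[unfolded card_Rj] Mmat_def Let_def using Kn n2 k2 by (simp add: of_nat_diff field_simps)
  have e31: "Cmat n k 3 1 = of_int (Mmat n k 3 1)"
    unfolding c31[unfolded card_Rj] Mmat_def Let_def using Kn n2 k2 by (simp add: of_nat_diff field_simps)
  have e32: "Cmat n k 3 2 = of_int (Mmat n k 3 2)"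
    unfolding c32[unfolded card_Rj] Mmat_def Let_def using Kn n2 k2 by (simp add: of_nat_diff field_simps)
  have e33: "Cmat n k 3 3 = of_int (Mmat n k 3 3)"
    unfolding c33[unfolded card_Rj] Mmat_def Let_def using Kn n2 k2 by (simp add: of_nat_diff field_simps)
  show ?thesis using e11 e12 e13 e21 e22 e23 e31 e32 e33 by auto
qed

end

lemma Mmat_transpose: "\<forall>i\<in>{1, 2, 3}. \<forall>j\<in>{1, 2, 3}. Mmat n k j i = Mmat k n i j"
  by (auto simp: Mmat_def Let_def algebra_simps)

theorem mainTheorem15:
  fixes n k :: nat
  assumes "n \<ge> 2" and "k \<ge> 2"
  shows "gelfand_pair (stabH n k) (wreathG n k)
    \<and> orbits_of (stabH n k) (Xset n k) = {orb1 n k, orb2 n k, orb3 n k}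
    \<and> card (orb1 n k) = 1 \<and> card (orb2 n k) = n - 1 \<and> card (orb3 n k) = n * (k - 1)
    \<and> direct_sum3 (funsp (Xset n k)) (Tconst n k) (Tcol n k) (Trest n k)
    \<and> (\<forall>j\<in>{1, 2, 3}. irreducible_rep (wreathG n k) (Tj n k j))
    \<and> (\<forall>i\<in>{1, 2, 3}. \<forall>j\<in>{1, 2, 3}. i \<noteq> j \<longrightarrow>
          \<not> isomorphic_rep (wreathG n k) (Tj n k i) (Tj n k j))
    \<and> cdim (Tcol n k) = k - 1 \<and> cdim (Trest n k) = (n - 1) * k
    \<and> (\<forall>i\<in>{1, 2, 3}. \<forall>j\<in>{1, 2, 3}. Cmat n k i j = of_int (Mmat n k i j))
    \<and> (\<forall>i\<in>{1, 2, 3}. \<forall>j\<in>{1, 2, 3}. Mmat n k j i = Mmat k n i j)"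
proof -
  interpret wr n k using assms by unfold_locales
  have o1: "card (orb1 n k) = 1" by (simp add: orb1_def)
  have o2: "card (orb2 n k) = n - 1" by (simp add: orb2_def)
  have o3: "card (orb3 n k) = n * (k - 1)" by (simp add: orb3_def)
  have irr: "\<forall>j\<in>{1, 2, 3}. irreducible_rep (wreathG n k) (Tj n k j)"
    using irr1 irr2 irr3 by (auto simp: Tj_def)
  show ?thesis
    by (intro conjI gelfand orbits o1 o2 o3 direct_sum irr noniso_all dim_Tcol dim_Trest Cmat_all Mmat_transpose)
qed

end
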